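(* Let $G=(V,E_1,\dots,E_k)$ be a complete edge-colored graph. Then the following statements are equivalent: (i) $G$ is a complete edge-colored permutation graph, i.e., there exists a labeling $\ell$ of $G$ such that for each monochromatic subgraph $G_{|i}$ of $G$, $(G_{|i},\ell)$ is a simple permutation graph. (ii) Each induced subgraph of $G$ is a complete edge-colored permutation graph. (iii) For each strong module $M$ of $G$, the quotient graph $G[M]/\mathbb{P}_{\max}(M)$ is a complete edge-colored permutation graph. (iv) For each strong prime module $M$ of $G$, the quotient graph $G[M]/\mathbb{P}_{\max}(M)$ is a complete edge-colored permutation graph; in particular, the quotient graph of each strong prime module on at least three vertices is $2$-edge-colored. (v) Each monochromatic subgraph $G_{|i}$ of $G$, together with some labeling (possibly depending on $i$ and different from the one in (i)), is a simple permutation graph, and $G$ does not contain a rainbow triangle.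
   Context: All graphs are finite, simple and undirected; $[n]=\{1,\dots,n\}$. A permutation of length $n$ is a bijection $\pi:[n]\to[n]$. A labeling of a graph with vertex set $V$ is a bijection $\ell:V\to[|V|]$. A graph $H=(V,E)$ together with a labeling $\ell$ is a (simple) permutation graph of a permutation $\pi$ of length $|V|$ if for all $u,v\in V$ with $\ell(u)>\ell(v)$: $\{u,v\}\in E$ iff $\pi^{-1}(\ell(u))<\pi^{-1}(\ell(v))$; $H$ is a simple permutation graph if such $\ell,\pi$ exist. A complete $k$-edge-colored graph $G=(V,E_1,\dots,E_k)$ is the complete graph on $V$ whose edge set is partitioned into $k$ nonempty color classes $E_1,\dots,E_k$ (edge $e\in E_i$ has color $i$); the one-vertex graph is also regarded as a complete edge-colored graph. The $i$-th monochromatic subgraph is $G_{|i}=(V,E_i)$. Induced subgraphs keep the colors of their edges (and may use fewer colors). $G$ is a complete edge-colored permutation graph if there are a labeling $\ell$ and permutations $\pi_1,\dots,\pi_k$ such that $(G_{|i},\ell)$ is a simple permutation graph of $\pi_i$ for each $i$. A rainbow triangle is a set of three vertices whose three edges have pairwise distinct colors. A module of $G$ is a set $M\subseteq V$ such that for every $v\in V\setminus M$ all edges $\{u,v\}$ with $u\in M$ have the same color. A strong module is a nonempty module $M$ such that every module $M'$ satisfies $M\subseteq M'$, $M'\subseteq M$ or $M\cap M'=\emptyset$. For a strong module $M$ with $|M|\ge 2$, $\mathbb{P}_{\max}(M)$ is the set of inclusion-maximal strong modules properly contained in $M$ (it partitions $M$); the quotient graph $G[M]/\mathbb{P}_{\max}(M)$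 is the complete graph on vertex set $\mathbb{P}_{\max}(M)$ in which the edge $\{M_a,M_b\}$ gets the (common) color of all edges $\{u,v\}$ with $u\in M_a$, $v\in M_b$. For $|M|=1$ the quotient graph is the one-vertex graph. A strong module $M$ is series if its quotient graph has at least two vertices and all its edges have the same color, and prime otherwise. *)

theory Defs
  imports Main
begin

text \<open>A complete edge-colored graph is given by a finite nonempty vertex set V and a
  symmetric colouring c of the edges (c u v is the colour of the edge {u,v}, u \<noteq> v).
  Its colours are exactly those actually used, so every colour class is nonempty.\<close>

definition ecg :: "'a set \<Rightarrow> ('a \<Rightarrow> 'a \<Rightarrow> 'c) \<Rightarrow> bool" where
  "ecg V c \<longleftrightarrow> finite V \<and> V \<noteq> {} \<and> (\<forall>u\<in>V. \<forall>v\<in>V. c u v = c v u)"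

definition colors :: "'a set \<Rightarrow> ('a \<Rightarrow> 'a \<Rightarrow> 'c) \<Rightarrow> 'c set" where
  "colors V c = {c u v | u v. u \<in> V \<and> v \<in> V \<and> u \<noteq> v}"

definition mono_edges :: "('a \<Rightarrow> 'a \<Rightarrow> 'c) \<Rightarrow> 'c \<Rightarrow> 'a \<Rightarrow> 'a \<Rightarrow> bool" where
  "mono_edges c i u v \<longleftrightarrow> u \<noteq> v \<and> c u v = i"

definition perm_graph_of :: "'a set \<Rightarrow> ('a \<Rightarrow> 'a \<Rightarrow> bool) \<Rightarrow> ('a \<Rightarrow> nat) \<Rightarrow> (nat \<Rightarrow> nat) \<Rightarrow> bool" where
  "perm_graph_of V E l pi \<longleftrightarrow>
     bij_betw l V {1..card V} \<and> bij_betw pi {1..card V} {1..card V} \<and>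
     (\<forall>u\<in>V. \<forall>v\<in>V. l u > l v \<longrightarrow>
        (E u v \<longleftrightarrow> inv_into {1..card V} pi (l u) < inv_into {1..card V} pi (l v)))"

definition simple_perm_graph :: "'a set \<Rightarrow> ('a \<Rightarrow> 'a \<Rightarrow> bool) \<Rightarrow> bool" where
  "simple_perm_graph V E \<longleftrightarrow> (\<exists>l pi. perm_graph_of V E l pi)"

definition ce_perm_graph :: "'a set \<Rightarrow> ('a \<Rightarrow> 'a \<Rightarrow> 'c) \<Rightarrow> bool" where
  "ce_perm_graph V c \<longleftrightarrow>
     (\<exists>l. \<forall>i\<in>colors V c. \<exists>pi. perm_graph_of V (mono_edges c i) l pi)"

definition rainbow_triangle :: "'a set \<Rightarrow> ('a \<Rightarrow> 'a \<Rightarrow> 'c) \<Rightarrow> 'a \<Rightarrow> 'a \<Rightarrow> 'a \<Rightarrow> bool" where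
  "rainbow_triangle V c x y z \<longleftrightarrow> x \<in> V \<and> y \<in> V \<and> z \<in> V \<and> x \<noteq> y \<and> y \<noteq> z \<and> x \<noteq> z \<and>
     c x y \<noteq> c y z \<and> c x y \<noteq> c x z \<and> c y z \<noteq> c x z"

definition is_module :: "'a set \<Rightarrow> ('a \<Rightarrow> 'a \<Rightarrow> 'c) \<Rightarrow> 'a set \<Rightarrow> bool" where
  "is_module V c M \<longleftrightarrow> M \<subseteq> V \<and> (\<forall>v\<in>V - M. \<forall>u\<in>M. \<forall>u'\<in>M. c u v = c u' v)"

definition strong_module :: "'a set \<Rightarrow> ('a \<Rightarrow> 'a \<Rightarrow> 'c) \<Rightarrow> 'a set \<Rightarrow> bool" where
  "strong_module V c M \<longleftrightarrow> M \<noteq> {} \<and> is_module V c M \<and>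
     (\<forall>M'. is_module V c M' \<longrightarrow> M \<subseteq> M' \<or> M' \<subseteq> M \<or> M \<inter> M' = {})"

definition Pmax :: "'a set \<Rightarrow> ('a \<Rightarrow> 'a \<Rightarrow> 'c) \<Rightarrow> 'a set \<Rightarrow> 'a set set" where
  "Pmax V c M = {N. strong_module V c N \<and> N \<subset> M \<and>
      (\<forall>N'. strong_module V c N' \<and> N' \<subset> M \<and> N \<subseteq> N' \<longrightarrow> N' = N)}"

definition quot_vertices :: "'a set \<Rightarrow> ('a \<Rightarrow> 'a \<Rightarrow> 'c) \<Rightarrow> 'a set \<Rightarrow> 'a set set" where
  "quot_vertices V c M = (if card M = 1 then {M} else Pmax V c M)"

text \<open>Colour of the quotient edge {A,B}: the common colour of the edges between A and B.\<close>
definition quot_color :: "('a \<Rightarrow> 'a \<Rightarrow> 'c) \<Rightarrow> 'a set \<Rightarrow> 'a set \<Rightarrow> 'c" where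
  "quot_color c A B = c (SOME u. u \<in> A) (SOME v. v \<in> B)"

definition prime_module :: "'a set \<Rightarrow> ('a \<Rightarrow> 'a \<Rightarrow> 'c) \<Rightarrow> 'a set \<Rightarrow> bool" where
  "prime_module V c M \<longleftrightarrow> strong_module V c M \<and>
     \<not> (card (quot_vertices V c M) \<ge> 2 \<and>
        (\<exists>col. \<forall>A\<in>quot_vertices V c M. \<forall>B\<in>quot_vertices V c M.
            A \<noteq> B \<longrightarrow> quot_color c A B = col))"

end

theory Submission
  imports Defs
begin

definition pgo :: "'a set \<Rightarrow> ('a \<Rightarrow> 'a \<Rightarrow> bool) \<Rightarrow> ('a \<Rightarrow> nat) \<Rightarrow> bool" where
  "pgo W E l \<longleftrightarrow> (\<exists>p::'a\<Rightarrow>nat. inj_on p W \<and> (\<forall>u\<in>W. \<forall>v\<in>W. l v < l u \<longrightarrow> (E u v \<longleftrightarrow> p u < p v)))"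

definition ceo :: "'a set \<Rightarrow> ('a \<Rightarrow> 'a \<Rightarrow> 'c) \<Rightarrow> bool" where
  "ceo W c \<longleftrightarrow> (\<exists>l::'a\<Rightarrow>nat. inj_on l W \<and> (\<forall>i\<in>colors W c. pgo W (mono_edges c i) l))"

lemma compress:
  assumes "finite W" "inj_on f W"
  shows "\<exists>g. bij_betw g W {1..card W} \<and> (\<forall>u\<in>W. \<forall>v\<in>W. g u < g v \<longleftrightarrow> f u < (f v::nat))"
proof -
  define g where "g u = card {w\<in>W. f w \<le> f u}" for u
  have mono: "g u < g v" if "u \<in> W" "v \<in> W" "f u < f v" for u v
  proof -
    have s1: "{w\<in>W. f w \<le> f u} \<subseteq> {w\<in>W. f w \<le> f v}"
      using that by auto
    have "v \<notin> {w\<in>W. f w \<le> f u}" "v \<in> {w\<in>W. f w \<le> f v}" using that by auto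
    then have "{w\<in>W. f w \<le> f u} \<subset> {w\<in>W. f w \<le> f v}" using s1 by blast
    then show ?thesis unfolding g_def using assms(1) by (intro psubset_card_mono) auto
  qed
  have ord: "g u < g v \<longleftrightarrow> f u < f v" if "u \<in> W" "v \<in> W" for u v
  proof
    assume "g u < g v"
    show "f u < f v"
    proof (rule ccontr)
      assume "\<not> f u < f v"
      then have "f v < f u \<or> f v = f u" by auto
      then show False
      proof
        assume "f v < f u" then show False using mono[OF that(2,1)] \<open>g u < g v\<close> by auto
      next
        assume "f v = f u" then have "u = v" using assms(2) that inj_on_def by metis
        then show False using \<open>g u < g v\<close> by auto
      qed
    qed
  qed (use mono that in auto)
  have inj: "inj_on g W"
  proof (rule inj_onI)
    fix u v assume "u \<in> W" "v \<in> W" "g u = g v"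
    then have "\<not> f u < f v" "\<not> f v < f u" using ord[OF \<open>u\<in>W\<close> \<open>v\<in>W\<close>] ord[OF \<open>v\<in>W\<close> \<open>u\<in>W\<close>] by auto
    then have "f u = f v" by auto
    then show "u = v" using assms(2) \<open>u \<in> W\<close> \<open>v \<in> W\<close> inj_on_def by metis
  qed
  have range: "g ` W \<subseteq> {1..card W}"
  proof
    fix x assume "x \<in> g ` W"
    then obtain u where u: "u \<in> W" "x = g u" by auto
    have "u \<in> {w\<in>W. f w \<le> f u}" using u by auto
    then have "card {w\<in>W. f w \<le> f u} \<ge> 1" using assms(1)
      by (metis (no_types, lifting) One_nat_def Suc_leI card_gt_0_iff empty_iff finite_subset mem_Collect_eq subsetI)
    moreover have "card {w\<in>W. f w \<le> f u} \<le> card W" using assms(1) by (intro card_mono) auto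
    ultimately show "x \<in> {1..card W}" using u g_def by auto
  qed
  have "g ` W = {1..card W}"
    using range inj card_image[OF inj] assms(1)
    by (metis card_atLeastAtMost card_subset_eq diff_Suc_1 finite_atLeastAtMost)
  then have "bij_betw g W {1..card W}" using inj by (simp add: bij_betw_def)
  then show ?thesis using ord by blast
qed

lemma pgo_order:
  assumes "\<forall>u\<in>W. \<forall>v\<in>W. l u < l v \<longleftrightarrow> l' u < (l' v::nat)" "pgo W E (l::'a\<Rightarrow>nat)"
  shows "pgo W E l'"
  using assms unfolding pgo_def by metis

lemma pgo_bounded:
  assumes "finite W" "pgo W E l"
  shows "\<exists>p. bij_betw p W {1..card W} \<and> (\<forall>u\<in>W. \<forall>v\<in>W. l v < l u \<longrightarrow> (E u v \<longleftrightarrow> p u < p v))"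
proof -
  obtain p :: "'a \<Rightarrow> nat" where p: "inj_on p W" "\<forall>u\<in>W. \<forall>v\<in>W. l v < l u \<longrightarrow> (E u v \<longleftrightarrow> p u < p v)"
    using assms(2) pgo_def by metis
  obtain q where q: "bij_betw q W {1..card W}" "\<forall>u\<in>W. \<forall>v\<in>W. q u < q v \<longleftrightarrow> p u < p v"
    using compress[OF assms(1) p(1)] by blast
  show ?thesis using p q by metis
qed

lemma perm_graph_iff:
  assumes "finite W" "bij_betw l W {1..card W}"
  shows "(\<exists>pi. perm_graph_of W E l pi) \<longleftrightarrow> pgo W E l"
proof
  assume "\<exists>pi. perm_graph_of W E l pi"
  then obtain pi where pi: "perm_graph_of W E l pi" by blast
  define p where "p u = inv_into {1..card W} pi (l u)" for u
  have bpi: "bij_betw pi {1..card W} {1..card W}" using pi perm_graph_of_def by blast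
  have "inj_on p W"
  proof (rule inj_onI)
    fix u v assume uv: "u \<in> W" "v \<in> W" "p u = p v"
    have "l u \<in> {1..card W}" "l v \<in> {1..card W}" using assms(2) uv bij_betwE by blast+
    then have "l u = l v" using uv(3) unfolding p_def
      by (metis bij_betw_def bpi f_inv_into_f)
    then show "u = v" using assms(2) uv bij_betw_def inj_on_def by metis
  qed
  moreover have "\<forall>u\<in>W. \<forall>v\<in>W. l v < l u \<longrightarrow> (E u v \<longleftrightarrow> p u < p v)"
    using pi unfolding perm_graph_of_def p_def by blast
  ultimately show "pgo W E l" unfolding pgo_def by blast
next
  assume "pgo W E l"
  then obtain q where q: "bij_betw q W {1..card W}" "\<forall>u\<in>W. \<forall>v\<in>W. l v < l u \<longrightarrow> (E u v \<longleftrightarrow> q u < q v)"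
    using pgo_bounded[OF assms(1)] by blast
  define pi where "pi k = l (inv_into W q k)" for k
  have bpi: "bij_betw pi {1..card W} {1..card W}"
    unfolding pi_def using bij_betw_trans[OF bij_betw_inv_into[OF q(1)] assms(2)]
    by (simp add: comp_def)
  have key: "inv_into {1..card W} pi (l u) = q u" if "u \<in> W" for u
  proof -
    have "q u \<in> {1..card W}" using q(1) that bij_betwE by blast
    moreover have "pi (q u) = l u" unfolding pi_def using q(1) that
      by (simp add: bij_betw_imp_inj_on)
    ultimately show ?thesis using bpi
      by (metis bij_betw_imp_inj_on inv_into_f_f)
  qed
  have "perm_graph_of W E l pi"
    unfolding perm_graph_of_def using assms(2) bpi q(2) key by auto
  then show "\<exists>pi. perm_graph_of W E l pi" by blast
qed

lemma finite_inj_nat: "finite W \<Longrightarrow> \<exists>l::'a\<Rightarrow>nat. inj_on l W"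
  using finite_imp_inj_to_nat_seg by blast

lemma ce_iff:
  assumes "finite W"
  shows "ce_perm_graph W c \<longleftrightarrow> ceo W c"
proof
  assume "ce_perm_graph W c"
  then obtain l where l: "\<forall>i\<in>colors W c. \<exists>pi. perm_graph_of W (mono_edges c i) l pi"
    unfolding ce_perm_graph_def by blast
  show "ceo W c"
  proof (cases "colors W c = {}")
    case True
    then show ?thesis using finite_inj_nat[OF assms] unfolding ceo_def by auto
  next
    case False
    then obtain i where i: "i \<in> colors W c" by blast
    then obtain pi where "perm_graph_of W (mono_edges c i) l pi" using l by blast
    then have bl: "bij_betw l W {1..card W}" unfolding perm_graph_of_def by blast
    then show ?thesis unfolding ceo_def using l perm_graph_iff[OF assms bl]
      by (metis bij_betw_imp_inj_on)
  qed
next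
  assume "ceo W c"
  then obtain l where l: "inj_on l W" "\<forall>i\<in>colors W c. pgo W (mono_edges c i) l"
    unfolding ceo_def by blast
  obtain g where g: "bij_betw g W {1..card W}" "\<forall>u\<in>W. \<forall>v\<in>W. g u < g v \<longleftrightarrow> l u < l v"
    using compress[OF assms l(1)] by blast
  have "\<forall>i\<in>colors W c. pgo W (mono_edges c i) g"
    using l(2) pgo_order[of W l g] g(2) by auto
  then show "ce_perm_graph W c" unfolding ce_perm_graph_def using perm_graph_iff[OF assms g(1)] by blast
qed

lemma spg_iff:
  assumes "finite W"
  shows "simple_perm_graph W E \<longleftrightarrow> (\<exists>l. inj_on l W \<and> pgo W E l)"
proof
  assume "simple_perm_graph W E"
  then obtain l pi where "perm_graph_of W E l pi" unfolding simple_perm_graph_def by blast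
  moreover then have "bij_betw l W {1..card W}" unfolding perm_graph_of_def by blast
  ultimately show "\<exists>l. inj_on l W \<and> pgo W E l" using perm_graph_iff[OF assms]
    by (metis bij_betw_imp_inj_on)
next
  assume "\<exists>l. inj_on l W \<and> pgo W E l"
  then obtain l where l: "inj_on l W" "pgo W E l" by blast
  obtain g where g: "bij_betw g W {1..card W}" "\<forall>u\<in>W. \<forall>v\<in>W. g u < g v \<longleftrightarrow> l u < l v"
    using compress[OF assms l(1)] by blast
  have "pgo W E g" using l(2) pgo_order[of W l g] g(2) by auto
  then show "simple_perm_graph W E" unfolding simple_perm_graph_def using perm_graph_iff[OF assms g(1)] by blast
qed

lemma pgo_transfer:
  assumes "inj_on f W" "f ` W \<subseteq> V" "\<forall>a\<in>W. \<forall>b\<in>W. E' a b \<longleftrightarrow> E (f a) (f b)" "pgo V E l"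
  shows "pgo W E' (l \<circ> f)"
proof -
  obtain p :: "'b \<Rightarrow> nat" where p: "inj_on p V" "\<forall>u\<in>V. \<forall>v\<in>V. l v < l u \<longrightarrow> (E u v \<longleftrightarrow> p u < p v)"
    using assms(4) unfolding pgo_def by blast
  have "inj_on (p \<circ> f) W" using comp_inj_on[OF assms(1) inj_on_subset[OF p(1) assms(2)]] .
  moreover have "\<forall>u\<in>W. \<forall>v\<in>W. (l \<circ> f) v < (l \<circ> f) u \<longrightarrow> (E' u v \<longleftrightarrow> (p \<circ> f) u < (p \<circ> f) v)"
    using p(2) assms(2,3) by auto
  ultimately show ?thesis unfolding pgo_def by blast
qed

lemma ceo_transfer:
  assumes "inj_on f W" "f ` W \<subseteq> V" "\<forall>a\<in>W. \<forall>b\<in>W. a \<noteq> b \<longrightarrow> c' a b = c (f a) (f b)" "ceo V c"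
  shows "ceo W c'"
proof -
  obtain l where l: "inj_on l V" "\<forall>i\<in>colors V c. pgo V (mono_edges c i) l"
    using assms(4) unfolding ceo_def by blast
  have "inj_on (l \<circ> f) W" using comp_inj_on[OF assms(1) inj_on_subset[OF l(1) assms(2)]] .
  moreover have "pgo W (mono_edges c' i) (l \<circ> f)" if ii: "i \<in> colors W c'" for i
  proof -
    obtain a b where ab: "a \<in> W" "b \<in> W" "a \<noteq> b" "c' a b = i" using ii unfolding colors_def by blast
    have "f a \<in> V" "f b \<in> V" using ab assms(2) by auto
    moreover have "f a \<noteq> f b" using inj_on_contraD[OF assms(1) ab(3) ab(1) ab(2)] .
    moreover have "c (f a) (f b) = i" using ab assms(3) by auto
    ultimately
    have "i \<in> colors V c" unfolding colors_def by blast
    then have "pgo V (mono_edges c i) l" using l by blast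
    moreover have "\<forall>a\<in>W. \<forall>b\<in>W. mono_edges c' i a b \<longleftrightarrow> mono_edges c i (f a) (f b)"
    proof (intro ballI)
      fix a b assume "a \<in> W" "b \<in> W"
      then have "a \<noteq> b \<longleftrightarrow> f a \<noteq> f b" using assms(1) inj_on_def by metis
      then show "mono_edges c' i a b \<longleftrightarrow> mono_edges c i (f a) (f b)"
        unfolding mono_edges_def using assms(3) \<open>a \<in> W\<close> \<open>b \<in> W\<close> by auto
    qed
    ultimately show ?thesis using pgo_transfer[OF assms(1,2)] by blast
  qed
  ultimately show ?thesis unfolding ceo_def by blast
qed

definition rep :: "'a set \<Rightarrow> 'a" where "rep A = (SOME u. u \<in> A)"

lemma rep_in: "A \<noteq> {} \<Longrightarrow> rep A \<in> A"
  unfolding rep_def by (simp add: some_in_eq)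

lemma quot_color_rep: "quot_color c A B = c (rep A) (rep B)"
  unfolding quot_color_def rep_def by simp

lemma ecg_sym:
  assumes "ecg V c" "x \<in> V" "y \<in> V" shows "c x y = c y x"
proof -
  have h: "\<forall>x\<in>V. \<forall>y\<in>V. c x y = c y x" using assms(1) unfolding ecg_def by (elim conjE)
  show ?thesis using bspec[OF bspec[OF h assms(2)] assms(3)] .
qed

lemma strong_single:
  assumes "x \<in> V" shows "strong_module V c {x}"
  unfolding strong_module_def is_module_def using assms by auto

lemma strong_V:
  assumes "V \<noteq> {}" shows "strong_module V c V"
  unfolding strong_module_def is_module_def using assms by auto

lemma strong_sub: "strong_module V c M \<Longrightarrow> M \<subseteq> V \<and> M \<noteq> {}"
  unfolding strong_module_def is_module_def by auto

lemma strong_is_module: "strong_module V c M \<Longrightarrow> is_module V c M"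
  unfolding strong_module_def by auto

lemma strong_cmp: "strong_module V c M \<Longrightarrow> is_module V c N \<Longrightarrow> M \<subseteq> N \<or> N \<subseteq> M \<or> M \<inter> N = {}"
  unfolding strong_module_def by blast

lemma module_sub: "is_module V c M \<Longrightarrow> M \<subseteq> V"
  unfolding is_module_def by (elim conjE)

lemma module_eq: "is_module V c M \<Longrightarrow> v \<in> V \<Longrightarrow> v \<notin> M \<Longrightarrow> u \<in> M \<Longrightarrow> u' \<in> M \<Longrightarrow> c u v = c u' v"
  unfolding is_module_def by blast

lemma pmax_strong: "A \<in> Pmax V c M \<Longrightarrow> strong_module V c A \<and> A \<subset> M"
  unfolding Pmax_def by auto

lemma pmax_max: "A \<in> Pmax V c M \<Longrightarrow> strong_module V c N \<Longrightarrow> N \<subset> M \<Longrightarrow> A \<subseteq> N \<Longrightarrow> N = A"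
  unfolding Pmax_def by auto

lemma pmax_disj:
  assumes "A \<in> Pmax V c M" "B \<in> Pmax V c M" "A \<noteq> B"
  shows "A \<inter> B = {}"
proof -
  have sA: "strong_module V c A" "A \<subset> M" and sB: "strong_module V c B" "B \<subset> M"
    using pmax_strong assms by blast+
  from strong_cmp[OF sA(1) strong_is_module[OF sB(1)]]
  show ?thesis
  proof (elim disjE)
    assume "A \<subseteq> B" then show ?thesis using pmax_max[OF assms(1) sB] assms(3) by blast
  next
    assume "B \<subseteq> A" then show ?thesis using pmax_max[OF assms(2) sA] assms(3) by blast
  qed
qed

lemma pmax_in:
  assumes "A \<in> Pmax V c M" "strong_module V c N" "N \<subset> M" "N \<inter> A \<noteq> {}"
  shows "N \<subseteq> A"
proof -
  have sA: "strong_module V c A" using pmax_strong assms by blast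
  from strong_cmp[OF sA strong_is_module[OF assms(2)]] show ?thesis
    using pmax_max[OF assms(1,2,3)] assms(4) by blast
qed

lemma pmax_cover:
  assumes "finite V" "strong_module V c M" "card M \<noteq> 1" "x \<in> M"
  shows "\<exists>A\<in>Pmax V c M. x \<in> A"
proof -
  have MV: "M \<subseteq> V" using strong_sub[OF assms(2)] by blast
  have fM: "finite M" using MV assms(1) finite_subset by blast
  define S where "S = {N. strong_module V c N \<and> N \<subset> M \<and> x \<in> N}"
  have "{x} \<noteq> M" using assms(3) by auto
  then have xS: "{x} \<in> S" unfolding S_def using strong_single[of x V c] MV assms(4) by auto
  have bnd: "\<forall>N. N \<in> S \<longrightarrow> card N \<le> card M"
  proof (intro allI impI)
    fix N assume "N \<in> S"
    then have "N \<subseteq> M" unfolding S_def by blast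
    then show "card N \<le> card M" using card_mono[OF fM] by blast
  qed
  obtain N where N: "N \<in> S" "\<forall>N'. N' \<in> S \<longrightarrow> card N' \<le> card N"
  proof -
    have "\<forall>N. N \<in> S \<longrightarrow> card N < Suc (card M)" using bnd by (simp add: le_imp_less_Suc)
    from Lattices_Big.ex_has_greatest_nat[of "\<lambda>N. N \<in> S", OF xS this] show ?thesis using that by blast
  qed
  have "N \<in> Pmax V c M"
    unfolding Pmax_def
  proof (intro CollectI conjI allI impI)
    show "strong_module V c N" "N \<subset> M" using N(1) S_def by auto
    fix N' assume h: "strong_module V c N' \<and> N' \<subset> M \<and> N \<subseteq> N'"
    then have "N' \<in> S" using N(1) unfolding S_def by auto
    then have "card N' \<le> card N" using N(2) by blast
    moreover have "finite N'" using h fM finite_subset by blast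
    ultimately show "N' = N" using h card_seteq by blast
  qed
  then show ?thesis using N(1) S_def by blast
qed

lemma modules_cross:
  assumes "ecg V c" "is_module V c A" "is_module V c B" "A \<inter> B = {}" "a \<in> A" "b \<in> B"
  shows "c a b = quot_color c A B"
proof -
  have AV: "A \<subseteq> V" using module_sub[OF assms(2)] .
  have BV: "B \<subseteq> V" using module_sub[OF assms(3)] .
  have ne: "A \<noteq> {}" "B \<noteq> {}" using assms(5,6) by auto
  have rA: "rep A \<in> A" using rep_in[OF ne(1)] .
  have rB: "rep B \<in> B" using rep_in[OF ne(2)] .
  note sym = ecg_sym[OF assms(1)]
  have bV: "b \<in> V" and bA: "b \<notin> A" using assms(4,6) BV by auto
  have rAV: "rep A \<in> V" and rAB: "rep A \<notin> B" using assms(4) rA AV by auto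
  have rBV: "rep B \<in> V" using rB BV by auto
  have "c a b = c (rep A) b" using module_eq[OF assms(2) bV bA assms(5) rA] .
  also have "\<dots> = c b (rep A)" using sym[OF rAV bV] .
  also have "\<dots> = c (rep B) (rep A)" using module_eq[OF assms(3) rAV rAB assms(6) rB] .
  also have "\<dots> = c (rep A) (rep B)" using sym[OF rBV rAV] .
  finally show ?thesis using quot_color_rep by metis
qed

lemma pmax_cross:
  assumes "ecg V c" "A \<in> Pmax V c M" "B \<in> Pmax V c M" "A \<noteq> B" "a \<in> A" "b \<in> B"
  shows "c a b = quot_color c A B"
  using modules_cross[OF assms(1) _ _ pmax_disj[OF assms(2,3,4)] assms(5,6)]
    pmax_strong[OF assms(2)] pmax_strong[OF assms(3)] strong_is_module by blast

lemma quot_vertices_props: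
  assumes "ecg V c" "strong_module V c M"
  shows "finite (quot_vertices V c M) \<and> (\<forall>A\<in>quot_vertices V c M. A \<noteq> {} \<and> A \<subseteq> V)
     \<and> (\<forall>A\<in>quot_vertices V c M. \<forall>B\<in>quot_vertices V c M. A \<noteq> B \<longrightarrow> A \<inter> B = {})"
proof (cases "card M = 1")
  case True
  then show ?thesis unfolding quot_vertices_def using strong_sub[OF assms(2)] by auto
next
  case False
  have fV: "finite V" using assms(1) ecg_def by blast
  have "Pmax V c M \<subseteq> Pow V" using pmax_strong strong_sub by blast
  then have f: "finite (Pmax V c M)" using finite_subset fV by (metis finite_Pow_iff)
  have q: "quot_vertices V c M = Pmax V c M" using False unfolding quot_vertices_def by simp
  have a: "\<forall>A\<in>Pmax V c M. A \<noteq> {} \<and> A \<subseteq> V" using pmax_strong strong_sub by blast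
  have b: "\<forall>A\<in>Pmax V c M. \<forall>B\<in>Pmax V c M. A \<noteq> B \<longrightarrow> A \<inter> B = {}" using pmax_disj by blast
  show ?thesis unfolding q using f a b by blast
qed

lemma rep_inj:
  assumes "\<forall>A\<in>Q. A \<noteq> {}" "\<forall>A\<in>Q. \<forall>B\<in>Q. A \<noteq> B \<longrightarrow> A \<inter> B = {}"
  shows "inj_on rep Q"
proof (rule inj_onI)
  fix A B assume "A \<in> Q" "B \<in> Q" "rep A = rep B"
  then show "A = B" using assms rep_in by (metis disjoint_iff)
qed

lemma ceo_quot:
  assumes "ecg V c" "strong_module V c M" "ceo V c"
  shows "ceo (quot_vertices V c M) (quot_color c)"
proof -
  note qp = quot_vertices_props[OF assms(1,2)]
  show ?thesis
  proof (rule ceo_transfer[where f=rep and V=V and c=c])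
    show "inj_on rep (quot_vertices V c M)" using rep_inj qp by blast
    show "rep ` quot_vertices V c M \<subseteq> V"
    proof
      fix x assume "x \<in> rep ` quot_vertices V c M"
      then obtain A where A: "A \<in> quot_vertices V c M" "x = rep A" by blast
      then have ne: "A \<noteq> {}" and AV: "A \<subseteq> V" using qp by auto
      show "x \<in> V" using rep_in[OF ne] A(2) AV by blast
    qed
    show "\<forall>a\<in>quot_vertices V c M. \<forall>b\<in>quot_vertices V c M. a \<noteq> b \<longrightarrow> quot_color c a b = c (rep a) (rep b)"
      using quot_color_rep by metis
  qed (rule assms(3))
qed

definition conn :: "'a set \<Rightarrow> ('a \<Rightarrow> 'a \<Rightarrow> 'c) \<Rightarrow> 'c \<Rightarrow> 'a \<Rightarrow> 'a \<Rightarrow> bool" where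
  "conn H c al x y \<longleftrightarrow> x \<in> H \<and> y \<in> H \<and> x \<noteq> y \<and> c x y = al"

lemma rt_sym:
  assumes "\<And>x y. r x y \<Longrightarrow> r y x" "r\<^sup>*\<^sup>* x y"
  shows "r\<^sup>*\<^sup>* y x"
  using assms(2)
proof (induction rule: rtranclp_induct)
  case base then show ?case by simp
next
  case (step y z)
  have "r z y" using assms(1) step(2) .
  then show ?case using step(3) by (simp add: converse_rtranclp_into_rtranclp)
qed

lemma conn_sym:
  assumes "\<forall>x\<in>H. \<forall>y\<in>H. c x y = c y x" "conn H c al x y"
  shows "conn H c al y x"
  using assms unfolding conn_def by (metis)

lemma conn_rt_sym:
  assumes "\<forall>x\<in>H. \<forall>y\<in>H. c x y = c y x" "(conn H c al)\<^sup>*\<^sup>* x y"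
  shows "(conn H c al)\<^sup>*\<^sup>* y x"
  using rt_sym[of "conn H c al", OF conn_sym[OF assms(1)] assms(2)] by blast

lemma crossing:
  assumes "r\<^sup>*\<^sup>* a b" "P a" "\<not> P b"
  shows "\<exists>x y. r\<^sup>*\<^sup>* a x \<and> r x y \<and> P x \<and> \<not> P y"
  using assms
proof (induction rule: rtranclp_induct)
  case base then show ?case by simp
next
  case (step y z)
  show ?case
  proof (cases "P y")
    case True then show ?thesis using step by blast
  next
    case False
    then obtain x y' where "r\<^sup>*\<^sup>* a x" "r x y'" "P x" "\<not> P y'" using step by blast
    then show ?thesis by blast
  qed
qed

lemma not_rainbow:
  assumes "\<not> (\<exists>x y z. rainbow_triangle H c x y z)" "x \<in> H" "y \<in> H" "z \<in> H" "x \<noteq> y" "y \<noteq> z" "x \<noteq> z"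
  shows "c x y = c y z \<or> c x y = c x z \<or> c y z = c x z"
  using assms unfolding rainbow_triangle_def by blast

lemma R1:
  assumes sym: "\<forall>x\<in>H. \<forall>y\<in>H. c x y = c y x"
    and rf: "\<not> (\<exists>x y z. rainbow_triangle H c x y z)"
    and path: "(conn H c al)\<^sup>*\<^sup>* y y'"
    and x: "x \<in> H" and nr: "\<not> (conn H c al)\<^sup>*\<^sup>* x y"
  shows "c x y = c x y'"
  using path
proof (induction rule: rtranclp_induct)
  case base then show ?case by simp
next
  case (step y1 y2)
  let ?R = "(conn H c al)\<^sup>*\<^sup>*"
  have n1: "\<not> ?R x y1"
  proof
    assume "?R x y1"
    moreover have "?R y1 y" using conn_rt_sym[OF sym step(1)] .
    ultimately show False using nr by (meson rtranclp_trans)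
  qed
  have n2: "\<not> ?R x y2"
  proof
    assume "?R x y2"
    moreover have "?R y y2" using step(1,2) by (meson rtranclp.rtrancl_into_rtrancl)
    then have "?R y2 y" using conn_rt_sym[OF sym] by blast
    ultimately show False using nr by (meson rtranclp_trans)
  qed
  have e: "y1 \<in> H" "y2 \<in> H" "y1 \<noteq> y2" "c y1 y2 = al" using step(2) unfolding conn_def by auto
  have "x \<noteq> y1" using n1 by auto
  have "x \<noteq> y2" using n2 by auto
  have "c x y1 \<noteq> al"
  proof
    assume "c x y1 = al"
    then have "conn H c al x y1" unfolding conn_def using x e \<open>x \<noteq> y1\<close> by auto
    then show False using n1 by auto
  qed
  have "c x y2 \<noteq> al"
  proof
    assume "c x y2 = al"
    then have "conn H c al x y2" unfolding conn_def using x e \<open>x \<noteq> y2\<close> by auto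
    then show False using n2 by auto
  qed
  have "c x y1 = c y1 y2 \<or> c x y1 = c x y2 \<or> c y1 y2 = c x y2"
    using not_rainbow[OF rf x e(1) e(2) \<open>x \<noteq> y1\<close> e(3) \<open>x \<noteq> y2\<close>] .
  then have "c x y1 = c x y2" using e(4) \<open>c x y1 \<noteq> al\<close> \<open>c x y2 \<noteq> al\<close> by auto
  then show ?case using step(3) by simp
qed

lemma first_step:
  assumes "(conn H c al)\<^sup>*\<^sup>* x y" "x \<noteq> y"
  shows "\<exists>w. w \<in> H \<and> x \<in> H \<and> w \<noteq> x \<and> c x w = al"
  using assms
proof (cases rule: converse_rtranclpE)
  case (step w)
  then show ?thesis unfolding conn_def by blast
qed simp

lemma GS:
  assumes "finite H"
  shows "(\<forall>x\<in>H. \<forall>y\<in>H. c x y = c y x) \<longrightarrow> \<not> (\<exists>x y z. rainbow_triangle H c x y z) \<longrightarrow>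
    a1 \<in> colors H c \<longrightarrow> a2 \<in> colors H c \<longrightarrow> a3 \<in> colors H c \<longrightarrow> a1 \<noteq> a2 \<longrightarrow> a2 \<noteq> a3 \<longrightarrow> a1 \<noteq> a3 \<longrightarrow>
    (\<exists>d\<in>colors H c. \<exists>x\<in>H. \<exists>y\<in>H. \<not> (conn H c d)\<^sup>*\<^sup>* x y)"
  using assms
proof (induction H arbitrary: a1 a2 a3 rule: finite_induct)
  case empty
  then show ?case unfolding colors_def by auto
next
  case (insert v F)
  let ?H = "insert v F"
  show ?case
  proof (intro impI)
    assume sym: "\<forall>x\<in>?H. \<forall>y\<in>?H. c x y = c y x"
      and rf: "\<not> (\<exists>x y z. rainbow_triangle ?H c x y z)"
      and cols: "a1 \<in> colors ?H c" "a2 \<in> colors ?H c" "a3 \<in> colors ?H c" "a1 \<noteq> a2" "a2 \<noteq> a3" "a1 \<noteq> a3"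
    show "\<exists>d\<in>colors ?H c. \<exists>x\<in>?H. \<exists>y\<in>?H. \<not> (conn ?H c d)\<^sup>*\<^sup>* x y"
    proof (rule ccontr)
      assume "\<not> ?thesis"
      then have allc: "\<And>d x y. d \<in> colors ?H c \<Longrightarrow> x \<in> ?H \<Longrightarrow> y \<in> ?H \<Longrightarrow> (conn ?H c d)\<^sup>*\<^sup>* x y" by blast
      have symF: "\<forall>x\<in>F. \<forall>y\<in>F. c x y = c y x" using sym by blast
      have rfF: "\<not> (\<exists>x y z. rainbow_triangle F c x y z)" using rf unfolding rainbow_triangle_def by blast
      have colsub: "colors F c \<subseteq> colors ?H c" unfolding colors_def by blast
      have vF: "v \<notin> F" by fact
      have edge: "\<exists>w\<in>F. c v w = d" if "d \<in> colors ?H c" "u \<in> F" for d u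
      proof -
        have "(conn ?H c d)\<^sup>*\<^sup>* v u" using allc[OF that(1)] that(2) by blast
        moreover have "v \<noteq> u" using vF that(2) by blast
        ultimately obtain w where "w \<in> ?H" "w \<noteq> v" "c v w = d" using first_step by metis
        then show ?thesis by blast
      qed
      show False
      proof (cases "\<exists>b1 b2 b3. b1 \<in> colors F c \<and> b2 \<in> colors F c \<and> b3 \<in> colors F c \<and> b1 \<noteq> b2 \<and> b2 \<noteq> b3 \<and> b1 \<noteq> b3")
        case True
        then obtain b1 b2 b3 where bs: "b1 \<in> colors F c" "b2 \<in> colors F c" "b3 \<in> colors F c" "b1 \<noteq> b2" "b2 \<noteq> b3" "b1 \<noteq> b3"
          by blast
        from insert.IH[of b1 b2 b3] symF rfF bs
        obtain al x0 y0 where al: "al \<in> colors F c" "x0 \<in> F" "y0 \<in> F" "\<not> (conn F c al)\<^sup>*\<^sup>* x0 y0"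
          by blast
        let ?R = "(conn F c al)\<^sup>*\<^sup>*"
        have Rsym: "?R x y \<Longrightarrow> ?R y x" for x y using conn_rt_sym[OF symF] by blast
        have alH: "al \<in> colors ?H c" using al(1) colsub by blast
        obtain be ga where bg: "be \<in> colors ?H c" "ga \<in> colors ?H c" "be \<noteq> al" "ga \<noteq> al" "be \<noteq> ga"
          using cols by metis
        have claim: "c w z = d" if h: "d \<noteq> al" "w \<in> F" "c v w = d" "z \<in> F" "\<not> ?R w z" for d w z
        proof -
          have ex: "\<exists>x. x \<in> F \<and> ?R z x \<and> c v x = al"
          proof (rule ccontr)
            assume nex: "\<not> (\<exists>x. x \<in> F \<and> ?R z x \<and> c v x = al)"
            have clos: "y \<in> F \<and> ?R z y" if "(conn ?H c al)\<^sup>*\<^sup>* z y" for y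
              using that
            proof (induction rule: rtranclp_induct)
              case base then show ?case using h(4) by simp
            next
              case (step y1 y2)
              have e: "y1 \<in> ?H" "y2 \<in> ?H" "y1 \<noteq> y2" "c y1 y2 = al" using step(2) unfolding conn_def by auto
              have y1F: "y1 \<in> F" "?R z y1" using step(3) by auto
              show ?case
              proof (cases "y2 = v")
                case True
                then have "c v y1 = al" using e(4) sym e(1,2) by metis
                then show ?thesis using nex y1F by blast
              next
                case False
                then have "y2 \<in> F" using e(2) by blast
                then have "conn F c al y1 y2" unfolding conn_def using y1F e by blast
                then show ?thesis using y1F \<open>y2 \<in> F\<close> by (meson rtranclp.rtrancl_into_rtrancl)
              qed
            qed
            have "(conn ?H c al)\<^sup>*\<^sup>* z w" using allc[OF alH] h(2,4) by blast
            then have "?R z w" using clos by blast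
            then show False using h(5) Rsym by blast
          qed
          then obtain x where x: "x \<in> F" "?R z x" "c v x = al" by blast
          have nwx: "\<not> ?R w x"
          proof
            assume "?R w x"
            moreover have "?R x z" using Rsym x(2) by blast
            ultimately show False using h(5) by (meson rtranclp_trans)
          qed
          then have "w \<noteq> x" by auto
          have cwx: "c w x \<noteq> al"
          proof
            assume "c w x = al"
            then have "conn F c al w x" unfolding conn_def using h(2) x(1) \<open>w \<noteq> x\<close> by blast
            then show False using nwx by auto
          qed
          have "v \<noteq> w" "v \<noteq> x" using vF h(2) x(1) by auto
          then have "c v w = c w x \<or> c v w = c v x \<or> c w x = c v x"
            using not_rainbow[OF rf, of v w x] h(2) x(1) \<open>w \<noteq> x\<close> by blast
          then have "c w x = d" using h(1,3) x(3) cwx by auto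
          moreover have "c w z = c w x" using R1[OF symF rfF x(2) h(2) h(5)] .
          ultimately show ?thesis by simp
        qed
        obtain wb where wb: "wb \<in> F" "c v wb = be" using edge[OF bg(1) al(2)] by blast
        obtain wg where wg: "wg \<in> F" "c v wg = ga" using edge[OF bg(2) al(2)] by blast
        show False
        proof (cases "?R wb wg")
          case False
          have "c wb wg = be" using claim[OF bg(3) wb(1) wb(2) wg(1) False] .
          moreover have "c wg wb = ga" using claim[OF bg(4) wg(1) wg(2) wb(1)] False Rsym by blast
          moreover have "c wb wg = c wg wb" using symF wb(1) wg(1) by blast
          ultimately show False using bg(5) by simp
        next
          case True
          obtain z where z: "z \<in> F" "\<not> ?R wb z"
          proof (cases "?R wb x0")
            case True
            have "\<not> ?R wb y0"
            proof
              assume "?R wb y0"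
              then show False using True al(4) Rsym by (meson rtranclp_trans)
            qed
            then show ?thesis using that al(3) by blast
          next
            case False then show ?thesis using that al(2) by blast
          qed
          have nz: "\<not> ?R wg z"
          proof
            assume "?R wg z" then show False using True z(2) by (meson rtranclp_trans)
          qed
          have "c wb z = be" using claim[OF bg(3) wb(1) wb(2) z] .
          moreover have "c wg z = ga" using claim[OF bg(4) wg(1) wg(2) z(1) nz] .
          moreover have "c z wb = c z wg"
            using R1[OF symF rfF True z(1)] z(2) Rsym by blast
          moreover have "c z wb = c wb z" "c z wg = c wg z" using symF z(1) wb(1) wg(1) by blast+
          ultimately show False using bg(5) by simp
        qed
      next
        case False
        obtain d where d: "d \<in> colors ?H c" "d \<notin> colors F c"
          using False cols by blast
        obtain a where a: "a \<in> colors ?H c" "a \<noteq> d" using cols by metis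
        obtain p q where pq: "p \<in> ?H" "q \<in> ?H" "p \<noteq> q" using d(1) unfolding colors_def by blast
        obtain u where u: "u \<in> F" using pq vF by blast
        have cv: "c u' v = d" if "u' \<in> F" for u'
        proof -
          have "(conn ?H c d)\<^sup>*\<^sup>* u' v" using allc[OF d(1)] that by blast
          moreover have "u' \<noteq> v" using that vF by blast
          ultimately obtain w where w: "w \<in> ?H" "w \<noteq> u'" "c u' w = d" using first_step by metis
          show ?thesis
          proof (cases "w = v")
            case True then show ?thesis using w by simp
          next
            case False
            then have "w \<in> F" using w(1) by blast
            then have "d \<in> colors F c" unfolding colors_def using that w by blast
            then show ?thesis using d(2) by blast
          qed
        qed
        obtain w where w: "w \<in> F" "c v w = a" using edge[OF a(1) u] by blast
        have "c v w = c w v" using sym w(1) by blast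
        then show False using cv[OF w(1)] w(2) a(2) by simp
      qed
    qed
  qed
qed

lemma quot_sym:
  assumes "ecg V c" "\<forall>A\<in>Q. A \<noteq> {} \<and> A \<subseteq> V"
  shows "\<forall>A\<in>Q. \<forall>B\<in>Q. quot_color c A B = quot_color c B A"
proof (intro ballI)
  fix A B assume h: "A \<in> Q" "B \<in> Q"
  then have "rep A \<in> V" "rep B \<in> V" using assms(2) rep_in by (metis subsetD)+
  then show "quot_color c A B = quot_color c B A" unfolding quot_color_rep using ecg_sym[OF assms(1)] by blast
qed

lemma quot_rf:
  assumes "\<not> (\<exists>x y z. rainbow_triangle V c x y z)" "\<forall>A\<in>Q. A \<noteq> {} \<and> A \<subseteq> V"
    "\<forall>A\<in>Q. \<forall>B\<in>Q. A \<noteq> B \<longrightarrow> A \<inter> B = {}"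
  shows "\<not> (\<exists>x y z. rainbow_triangle Q (quot_color c) x y z)"
proof
  assume "\<exists>x y z. rainbow_triangle Q (quot_color c) x y z"
  then obtain A B C where r: "rainbow_triangle Q (quot_color c) A B C" by blast
  have inj: "inj_on rep Q" using rep_inj assms(2,3) by blast
  have in3: "A \<in> Q" "B \<in> Q" "C \<in> Q" "A \<noteq> B" "B \<noteq> C" "A \<noteq> C" using r unfolding rainbow_triangle_def by auto
  have "rep A \<in> V" "rep B \<in> V" "rep C \<in> V" using assms(2) in3 rep_in by (metis subsetD)+
  moreover have "rep A \<noteq> rep B" "rep B \<noteq> rep C" "rep A \<noteq> rep C"
    using inj in3 inj_on_contraD by metis+
  ultimately have "rainbow_triangle V c (rep A) (rep B) (rep C)"
    using r unfolding rainbow_triangle_def quot_color_rep by blast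
  then show False using assms(1) by blast
qed

lemma lift_conn:
  assumes ecg: "ecg V c" and rf: "\<not> (\<exists>x y z. rainbow_triangle V c x y z)"
    and sM: "strong_module V c M" and c1: "card M \<noteq> 1"
    and A1: "A1 \<in> Pmax V c M" and A2: "A2 \<in> Pmax V c M" and ne12: "A1 \<noteq> A2"
    and al: "quot_color c A1 A2 = al"
  shows "\<forall>B\<in>Pmax V c M. (conn (Pmax V c M) (quot_color c) al)\<^sup>*\<^sup>* A1 B"
proof (rule ccontr)
  let ?P = "Pmax V c M"
  let ?cq = "quot_color c"
  let ?qc = "conn ?P ?cq al"
  let ?R = "?qc\<^sup>*\<^sup>*"
  assume "\<not> ?thesis"
  then obtain B0 where B0: "B0 \<in> ?P" "\<not> ?R A1 B0" by blast
  have fV: "finite V" using ecg ecg_def by blast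
  have MV: "M \<subseteq> V" using strong_sub[OF sM] by blast
  have qP: "quot_vertices V c M = ?P" using c1 unfolding quot_vertices_def by simp
  note qp = quot_vertices_props[OF ecg sM, unfolded qP]
  have qa: "\<forall>A\<in>?P. A \<noteq> {} \<and> A \<subseteq> V" using qp by (elim conjE)
  have qd: "\<forall>A\<in>?P. \<forall>B\<in>?P. A \<noteq> B \<longrightarrow> A \<inter> B = {}" using qp by (elim conjE)
  have neP: "\<And>A. A \<in> ?P \<Longrightarrow> A \<noteq> {}" using qa by blast
  have symP: "\<forall>A\<in>?P. \<forall>B\<in>?P. ?cq A B = ?cq B A" using quot_sym[OF ecg qa] .
  have rfP: "\<not> (\<exists>x y z. rainbow_triangle ?P ?cq x y z)" using quot_rf[OF rf qa qd] .
  have Rsym: "\<And>x y. ?R x y \<Longrightarrow> ?R y x" using conn_rt_sym[OF symP] by blast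
  have sub: "\<And>A. A \<in> ?P \<Longrightarrow> strong_module V c A \<and> A \<subset> M" using pmax_strong by blast
  have disj: "\<And>A B. A \<in> ?P \<Longrightarrow> B \<in> ?P \<Longrightarrow> A \<noteq> B \<Longrightarrow> A \<inter> B = {}" using pmax_disj by blast
  have cover: "\<And>x. x \<in> M \<Longrightarrow> \<exists>A\<in>?P. x \<in> A" using pmax_cover[OF fV sM c1] by blast
  have cross: "\<And>A B a b. A \<in> ?P \<Longrightarrow> B \<in> ?P \<Longrightarrow> A \<noteq> B \<Longrightarrow> a \<in> A \<Longrightarrow> b \<in> B \<Longrightarrow> c a b = ?cq A B"
    using pmax_cross[OF ecg] by blast
  define X where "X = {B\<in>?P. ?R A1 B}"
  define U where "U = \<Union>X"
  have A1X: "A1 \<in> X" unfolding X_def using A1 by simp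
  have e12: "?qc A1 A2" unfolding conn_def using A1 A2 ne12 al by blast
  have A2X: "A2 \<in> X" unfolding X_def using A2 e12 by simp
  have XP: "X \<subseteq> ?P" unfolding X_def by blast
  have UM: "U \<subseteq> M" unfolding U_def using XP sub by blast
  have UV: "U \<subseteq> V" using UM MV by blast
  have inU: "\<And>x. x \<in> U \<Longrightarrow> \<exists>A\<in>X. x \<in> A" unfolding U_def by blast
  have notX: "\<And>B x. B \<in> ?P \<Longrightarrow> B \<notin> X \<Longrightarrow> x \<in> B \<Longrightarrow> x \<notin> U"
  proof
    fix B x assume h: "B \<in> ?P" "B \<notin> X" "x \<in> B" "x \<in> U"
    then obtain A where "A \<in> X" "x \<in> A" using inU by blast
    then show False using h disj XP by blast
  qed
  have modU: "is_module V c U"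
    unfolding is_module_def
  proof (intro conjI ballI)
    show "U \<subseteq> V" by (rule UV)
    fix v u u' assume v: "v \<in> V - U" and u: "u \<in> U" and u': "u' \<in> U"
    obtain A where A: "A \<in> X" "u \<in> A" using inU[OF u] by blast
    obtain A' where A': "A' \<in> X" "u' \<in> A'" using inU[OF u'] by blast
    show "c u v = c u' v"
    proof (cases "v \<in> M")
      case False
      then show ?thesis using module_eq[OF strong_is_module[OF sM], of v u u'] v u u' UM by blast
    next
      case True
      obtain B where B: "B \<in> ?P" "v \<in> B" using cover[OF True] by blast
      have BX: "B \<notin> X" using B v unfolding U_def by blast
      have "A \<noteq> B" "A' \<noteq> B" using A A' BX by auto
      have AP: "A \<in> ?P" "A' \<in> ?P" using A A' XP by auto
      have cu: "c u v = ?cq A B" using cross[OF AP(1) B(1) \<open>A \<noteq> B\<close> A(2) B(2)] .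
      have cu': "c u' v = ?cq A' B" using cross[OF AP(2) B(1) \<open>A' \<noteq> B\<close> A'(2) B(2)] .
      have RA: "?R A1 A" "?R A1 A'" using A A' unfolding X_def by auto
      have RAA: "?R A A'" using Rsym[OF RA(1)] RA(2) by (meson rtranclp_trans)
      have nBA: "\<not> ?R B A"
      proof
        assume "?R B A"
        then have "?R A B" using Rsym by blast
        then have "?R A1 B" using RA(1) by (meson rtranclp_trans)
        then show False using BX B(1) unfolding X_def by blast
      qed
      have "?cq B A = ?cq B A'" using R1[OF symP rfP RAA B(1) nBA] .
      then have "?cq A B = ?cq A' B" using symP AP B(1) by metis
      then show ?thesis using cu cu' by simp
    qed
  qed
  have A1U: "A1 \<subseteq> U" unfolding U_def using A1X by blast
  have Une: "U \<noteq> {}" using A1U neP[OF A1] by blast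
  have strongU: "strong_module V c U"
    unfolding strong_module_def
  proof (intro conjI allI impI)
    show "U \<noteq> {}" by (rule Une)
    show "is_module V c U" by (rule modU)
    fix Y assume modY: "is_module V c Y"
    show "U \<subseteq> Y \<or> Y \<subseteq> U \<or> U \<inter> Y = {}"
    proof (rule ccontr)
      assume nn: "\<not> (U \<subseteq> Y \<or> Y \<subseteq> U \<or> U \<inter> Y = {})"
      have inY: "A \<subseteq> Y" if "A \<in> X" "A \<inter> Y \<noteq> {}" for A
      proof -
        have "strong_module V c A" using sub that(1) XP by blast
        from strong_cmp[OF this modY] have "A \<subseteq> Y \<or> Y \<subseteq> A" using that(2) by blast
        moreover have "A \<subseteq> U" unfolding U_def using that(1) by blast
        ultimately show ?thesis using nn by blast
      qed
      obtain Ain where Ain: "Ain \<in> X" "Ain \<inter> Y \<noteq> {}" using nn unfolding U_def by blast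
      obtain Aout where Aout: "Aout \<in> X" "\<not> Aout \<subseteq> Y" using nn unfolding U_def by blast
      have AinY: "Ain \<subseteq> Y" using inY Ain by blast
      have "?R A1 Ain" "?R A1 Aout" using Ain Aout unfolding X_def by auto
      then have "?R Ain Aout" using Rsym by (meson rtranclp_trans)
      from crossing[of ?qc Ain Aout "\<lambda>D. D \<subseteq> Y", OF this AinY Aout(2)]
      obtain D1 D2 where D: "?R Ain D1" "?qc D1 D2" "D1 \<subseteq> Y" "\<not> D2 \<subseteq> Y" by blast
      have "?R A1 D1" using \<open>?R A1 Ain\<close> D(1) by (meson rtranclp_trans)
      then have "?R A1 D2" using D(2) by (meson rtranclp.rtrancl_into_rtrancl)
      have D12: "D1 \<in> ?P" "D2 \<in> ?P" "D1 \<noteq> D2" "?cq D1 D2 = al" using D(2) unfolding conn_def by auto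
      have D2X: "D2 \<in> X" unfolding X_def using D12 \<open>?R A1 D2\<close> by blast
      have D2Y: "D2 \<inter> Y = {}" using inY[OF D2X] D(4) by blast
      obtain y where y: "y \<in> Y" "y \<notin> U" using nn by blast
      have YV: "Y \<subseteq> V" using module_sub[OF modY] .
      have yM: "y \<in> M"
      proof (rule ccontr)
        assume "y \<notin> M"
        from strong_cmp[OF sM modY] have "M \<subseteq> Y \<or> Y \<subseteq> M \<or> M \<inter> Y = {}" .
        moreover have "M \<inter> Y \<noteq> {}" using nn UM by blast
        ultimately have "M \<subseteq> Y" using \<open>y \<notin> M\<close> y by blast
        then show False using nn UM by blast
      qed
      obtain B where B: "B \<in> ?P" "y \<in> B" using cover[OF yM] by blast
      have BX: "B \<notin> X" using B y unfolding U_def by blast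
      have "B \<noteq> D2" using BX D2X by blast
      have d1: "rep D1 \<in> D1" using rep_in[OF neP[OF D12(1)]] .
      have d2: "rep D2 \<in> D2" using rep_in[OF neP[OF D12(2)]] .
      have d2V: "rep D2 \<in> V" using d2 D12(2) sub MV by blast
      have d2Y: "rep D2 \<notin> Y" using d2 D2Y by blast
      have "c (rep D1) (rep D2) = c y (rep D2)"
        using module_eq[OF modY d2V d2Y, of "rep D1" y] d1 D(3) y(1) by blast
      moreover have "c (rep D1) (rep D2) = al" using cross[OF D12(1,2,3) d1 d2] D12(4) by simp
      moreover have "c y (rep D2) = ?cq B D2" using cross[OF B(1) D12(2) \<open>B \<noteq> D2\<close> B(2) d2] .
      ultimately have "?cq B D2 = al" by simp
      then have "?cq D2 B = al" using symP B(1) D12(2) by metis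
      then have "?qc D2 B" unfolding conn_def using B(1) D12(2) \<open>B \<noteq> D2\<close> by blast
      then have "?R A1 B" using \<open>?R A1 D2\<close> by (meson rtranclp.rtrancl_into_rtrancl)
      then show False using BX B(1) unfolding X_def by blast
    qed
  qed
  have B0X: "B0 \<notin> X" using B0 unfolding X_def by blast
  obtain b where b: "b \<in> B0" using neP[OF B0(1)] by blast
  have "b \<in> M" using b sub B0(1) by blast
  moreover have "b \<notin> U" using notX[OF B0(1) B0X b] .
  ultimately have UsM: "U \<subset> M" using UM by blast
  have "U = A1" using pmax_max[OF A1 strongU UsM A1U] .
  moreover obtain a2 where "a2 \<in> A2" using neP[OF A2] by blast
  moreover have "a2 \<in> U" using \<open>a2 \<in> A2\<close> A2X unfolding U_def by blast
  moreover have "a2 \<notin> A1" using disj[OF A1 A2 ne12] \<open>a2 \<in> A2\<close> by blast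
  ultimately show False by blast
qed

lemma two_card:
  assumes "finite S" "x \<in> S" "y \<in> S" "x \<noteq> y"
    "\<not> (\<exists>a b d. a \<in> S \<and> b \<in> S \<and> d \<in> S \<and> a \<noteq> b \<and> b \<noteq> d \<and> a \<noteq> d)"
  shows "card S = 2"
proof -
  have "S = {x, y}" using assms by blast
  then show ?thesis using assms(4) by simp
qed

lemma colors_finite: "finite Q \<Longrightarrow> finite (colors Q c)"
proof -
  assume f: "finite Q"
  have "colors Q c \<subseteq> (\<lambda>(u,v). c u v) ` (Q \<times> Q)" unfolding colors_def by auto
  then show ?thesis using f finite_subset by blast
qed

lemma prime_two_colors:
  assumes ecg: "ecg V c" and rf: "\<not> (\<exists>x y z. rainbow_triangle V c x y z)"
    and pM: "prime_module V c M" and c3: "card (quot_vertices V c M) \<ge> 3"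
  shows "card (colors (quot_vertices V c M) (quot_color c)) = 2"
proof -
  let ?Q = "quot_vertices V c M"
  let ?cq = "quot_color c"
  have sM: "strong_module V c M" using pM prime_module_def by blast
  have c1: "card M \<noteq> 1" using c3 unfolding quot_vertices_def by auto
  have qP: "?Q = Pmax V c M" using c1 unfolding quot_vertices_def by simp
  note qp = quot_vertices_props[OF ecg sM]
  have fQ: "finite ?Q" using qp by (elim conjE)
  have qa: "\<forall>A\<in>?Q. A \<noteq> {} \<and> A \<subseteq> V" using qp by (elim conjE)
  have qd: "\<forall>A\<in>?Q. \<forall>B\<in>?Q. A \<noteq> B \<longrightarrow> A \<inter> B = {}" using qp by (elim conjE)
  have symQ: "\<forall>A\<in>?Q. \<forall>B\<in>?Q. ?cq A B = ?cq B A" using quot_sym[OF ecg qa] .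
  have rfQ: "\<not> (\<exists>x y z. rainbow_triangle ?Q ?cq x y z)" using quot_rf[OF rf qa qd] .
  have no3: "\<not> (\<exists>a b d. a \<in> colors ?Q ?cq \<and> b \<in> colors ?Q ?cq \<and> d \<in> colors ?Q ?cq \<and> a \<noteq> b \<and> b \<noteq> d \<and> a \<noteq> d)"
  proof
    assume "\<exists>a b d. a \<in> colors ?Q ?cq \<and> b \<in> colors ?Q ?cq \<and> d \<in> colors ?Q ?cq \<and> a \<noteq> b \<and> b \<noteq> d \<and> a \<noteq> d"
    then obtain a b d where abd: "a \<in> colors ?Q ?cq" "b \<in> colors ?Q ?cq" "d \<in> colors ?Q ?cq" "a \<noteq> b" "b \<noteq> d" "a \<noteq> d"
      by blast
    from GS[OF fQ, of ?cq a b d] symQ rfQ abd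
    obtain e x y where exy: "e \<in> colors ?Q ?cq" "x \<in> ?Q" "y \<in> ?Q" "\<not> (conn ?Q ?cq e)\<^sup>*\<^sup>* x y" by blast
    obtain A1 A2 where A: "A1 \<in> ?Q" "A2 \<in> ?Q" "A1 \<noteq> A2" "?cq A1 A2 = e" using exy(1) unfolding colors_def by blast
    have all: "\<forall>B\<in>?Q. (conn ?Q ?cq e)\<^sup>*\<^sup>* A1 B"
      using lift_conn[OF ecg rf sM c1, of A1 A2 e] A unfolding qP by blast
    have "(conn ?Q ?cq e)\<^sup>*\<^sup>* x A1" using conn_rt_sym[OF symQ] all exy(2) by blast
    then have "(conn ?Q ?cq e)\<^sup>*\<^sup>* x y" using all exy(3) by (meson rtranclp_trans)
    then show False using exy(4) by blast
  qed
  have "card ?Q \<ge> 2" using c3 by simp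
  then obtain A0 B0 where AB: "A0 \<in> ?Q" "B0 \<in> ?Q" "A0 \<noteq> B0"
    by (metis One_nat_def Suc_1 card_le_Suc_iff insert_iff numeral_2_eq_2)
  have col0: "?cq A0 B0 \<in> colors ?Q ?cq" unfolding colors_def using AB by blast
  have "\<not> (\<forall>A\<in>?Q. \<forall>B\<in>?Q. A \<noteq> B \<longrightarrow> ?cq A B = ?cq A0 B0)"
    using pM \<open>card ?Q \<ge> 2\<close> unfolding prime_module_def by blast
  then obtain A B where "A \<in> ?Q" "B \<in> ?Q" "A \<noteq> B" "?cq A B \<noteq> ?cq A0 B0" by blast
  then have col1: "?cq A B \<in> colors ?Q ?cq" "?cq A B \<noteq> ?cq A0 B0" unfolding colors_def by blast+
  show ?thesis using two_card[OF colors_finite[OF fQ] col0 col1(1) _ no3] col1(2) by metis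
qed

lemma lex_less:
  fixes a b x y K :: nat
  assumes "x < K" "y < K"
  shows "a * K + x < b * K + y \<longleftrightarrow> a < b \<or> (a = b \<and> x < y)"
proof -
  show ?thesis
  proof
    assume h: "a * K + x < b * K + y"
    show "a < b \<or> (a = b \<and> x < y)"
    proof (cases "a < b")
      case True then show ?thesis by simp
    next
      case False
      then have "b < a \<or> a = b" by auto
      then show ?thesis
      proof
        assume "b < a"
        have "Suc b * K \<le> a * K" using mult_le_mono1[OF Suc_leI[OF \<open>b < a\<close>], of K] .
        then have "b * K + y < a * K + x" using assms(2) by simp
        then show ?thesis using h by simp
      next
        assume "a = b" then show ?thesis using h by simp
      qed
    qed
  next
    assume "a < b \<or> (a = b \<and> x < y)"
    then show "a * K + x < b * K + y"
    proof
      assume "a < b"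
      have "Suc a * K \<le> b * K" using mult_le_mono1[OF Suc_leI[OF \<open>a < b\<close>], of K] .
      then show ?thesis using assms(1) by simp
    qed simp
  qed
qed

lemma lex_eq:
  fixes a b x y K :: nat
  assumes "x < K" "y < K" "a * K + x = b * K + y"
  shows "a = b \<and> x = y"
proof -
  have "\<not> (a < b \<or> (a = b \<and> x < y))" using lex_less[OF assms(1,2), of a b] assms(3) by simp
  moreover have "\<not> (b < a \<or> (b = a \<and> y < x))" using lex_less[OF assms(2,1), of b a] assms(3) by simp
  ultimately show ?thesis by auto
qed

lemma ceo_bounded:
  assumes "finite A" "ceo A c"
  shows "\<exists>lA. bij_betw lA A {1..card A} \<and> (\<forall>i\<in>colors A c. \<exists>p. bij_betw p A {1..card A} \<and>
          (\<forall>u\<in>A. \<forall>v\<in>A. lA v < lA u \<longrightarrow> (mono_edges c i u v \<longleftrightarrow> p u < p v)))"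
proof -
  obtain l :: "'a \<Rightarrow> nat" where l: "inj_on l A" "\<forall>i\<in>colors A c. pgo A (mono_edges c i) l"
    using assms(2) unfolding ceo_def by blast
  obtain g where g: "bij_betw g A {1..card A}" "\<forall>u\<in>A. \<forall>v\<in>A. g u < g v \<longleftrightarrow> l u < l v"
    using compress[OF assms(1) l(1)] by blast
  have "\<forall>i\<in>colors A c. pgo A (mono_edges c i) g"
    using l(2) pgo_order[of A l g] g(2) by auto
  then have "\<forall>i\<in>colors A c. \<exists>p. bij_betw p A {1..card A} \<and>
          (\<forall>u\<in>A. \<forall>v\<in>A. g v < g u \<longrightarrow> (mono_edges c i u v \<longleftrightarrow> p u < p v))"
    using pgo_bounded[OF assms(1)] by blast
  then show ?thesis using g(1) by blast
qed

lemma bij_range_lt: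
  assumes "bij_betw f A {1..(n::nat)}" "u \<in> A" "n < K"
  shows "f u < K"
proof -
  have "f u \<in> {1..n}" using bij_betwE[OF assms(1)] assms(2) by blast
  then show ?thesis using assms(3) by simp
qed

lemma subst:
  fixes c :: "'a \<Rightarrow> 'a \<Rightarrow> 'c" and c' :: "'a set \<Rightarrow> 'a set \<Rightarrow> 'c"
  assumes fM: "finite M" and ne: "\<forall>A\<in>P. A \<noteq> {}"
    and disj: "\<forall>A\<in>P. \<forall>B\<in>P. A \<noteq> B \<longrightarrow> A \<inter> B = {}"
    and un: "\<Union>P = M"
    and cross: "\<forall>A\<in>P. \<forall>B\<in>P. A \<noteq> B \<longrightarrow> (\<forall>u\<in>A. \<forall>v\<in>B. c u v = c' A B)"
    and ceoP: "ceo P c'" and ceoA: "\<forall>A\<in>P. ceo A c"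
  shows "ceo M c"
proof -
  define K where "K = Suc (card M)"
  have fP: "finite P" using fM un by (metis finite_UnionD)
  have AsubM: "\<And>A. A \<in> P \<Longrightarrow> A \<subseteq> M" using un by blast
  have fA: "\<And>A. A \<in> P \<Longrightarrow> finite A" using AsubM fM finite_subset by blast
  have cardA: "\<And>A. A \<in> P \<Longrightarrow> card A < K" unfolding K_def using AsubM fM card_mono
    by (metis le_imp_less_Suc)
  obtain L :: "'a set \<Rightarrow> nat" where L: "inj_on L P" "\<forall>i\<in>colors P c'. pgo P (mono_edges c' i) L"
    using ceoP unfolding ceo_def by blast
  have "\<forall>i\<in>colors P c'. \<exists>q::'a set \<Rightarrow> nat. inj_on q P \<and> (\<forall>A\<in>P. \<forall>B\<in>P. L B < L A \<longrightarrow> (mono_edges c' i A B \<longleftrightarrow> q A < q B))"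
    using L(2) unfolding pgo_def by blast
  from bchoice[OF this] obtain PQ :: "'c \<Rightarrow> 'a set \<Rightarrow> nat" where PQ: "\<forall>i\<in>colors P c'. inj_on (PQ i) P \<and> (\<forall>A\<in>P. \<forall>B\<in>P. L B < L A \<longrightarrow> (mono_edges c' i A B \<longleftrightarrow> PQ i A < PQ i B))"
    by blast
  have "\<forall>A\<in>P. \<exists>lA. bij_betw lA A {1..card A} \<and> (\<forall>i\<in>colors A c. \<exists>p. bij_betw p A {1..card A} \<and>
          (\<forall>u\<in>A. \<forall>v\<in>A. lA v < lA u \<longrightarrow> (mono_edges c i u v \<longleftrightarrow> p u < p v)))"
    using ceo_bounded fA ceoA by blast
  from bchoice[OF this] obtain LA :: "'a set \<Rightarrow> 'a \<Rightarrow> nat" where LA0: "\<forall>A\<in>P. bij_betw (LA A) A {1..card A} \<and> (\<forall>i\<in>colors A c. \<exists>p. bij_betw p A {1..card A} \<and>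
          (\<forall>u\<in>A. \<forall>v\<in>A. LA A v < LA A u \<longrightarrow> (mono_edges c i u v \<longleftrightarrow> p u < p v)))"
    by blast
  have "\<forall>A\<in>P. \<exists>PA1::'c \<Rightarrow> 'a \<Rightarrow> nat. \<forall>i\<in>colors A c. bij_betw (PA1 i) A {1..card A} \<and>
          (\<forall>u\<in>A. \<forall>v\<in>A. LA A v < LA A u \<longrightarrow> (mono_edges c i u v \<longleftrightarrow> PA1 i u < PA1 i v))"
  proof
    fix A assume "A \<in> P"
    then show "\<exists>PA1. \<forall>i\<in>colors A c. bij_betw (PA1 i) A {1..card A} \<and>
          (\<forall>u\<in>A. \<forall>v\<in>A. LA A v < LA A u \<longrightarrow> (mono_edges c i u v \<longleftrightarrow> PA1 i u < PA1 i v))"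
    proof -
      have "\<forall>i\<in>colors A c. \<exists>p. bij_betw p A {1..card A} \<and>
          (\<forall>u\<in>A. \<forall>v\<in>A. LA A v < LA A u \<longrightarrow> (mono_edges c i u v \<longleftrightarrow> p u < p v))"
        using LA0 \<open>A \<in> P\<close> by blast
      from bchoice[OF this] show ?thesis by blast
    qed
  qed
  from bchoice[OF this] obtain PA :: "'a set \<Rightarrow> 'c \<Rightarrow> 'a \<Rightarrow> nat" where PA: "\<forall>A\<in>P. \<forall>i\<in>colors A c. bij_betw (PA A i) A {1..card A} \<and>
          (\<forall>u\<in>A. \<forall>v\<in>A. LA A v < LA A u \<longrightarrow> (mono_edges c i u v \<longleftrightarrow> PA A i u < PA A i v))"
    by blast
  have LAb: "\<And>A. A \<in> P \<Longrightarrow> bij_betw (LA A) A {1..card A}" using LA0 by blast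
  have LAlt: "\<And>A u. A \<in> P \<Longrightarrow> u \<in> A \<Longrightarrow> LA A u < K" using bij_range_lt[OF LAb] cardA by blast
  have PAlt: "\<And>A i u. A \<in> P \<Longrightarrow> i \<in> colors A c \<Longrightarrow> u \<in> A \<Longrightarrow> PA A i u < K"
    using bij_range_lt PA cardA by metis
  define part where "part u = (SOME A. A \<in> P \<and> u \<in> A)" for u
  have part: "\<And>u. u \<in> M \<Longrightarrow> part u \<in> P \<and> u \<in> part u"
  proof -
    fix u assume "u \<in> M"
    then have "\<exists>A. A \<in> P \<and> u \<in> A" using un by blast
    then show "part u \<in> P \<and> u \<in> part u" unfolding part_def by (rule someI_ex)
  qed
  have part_eq: "\<And>u A. A \<in> P \<Longrightarrow> u \<in> A \<Longrightarrow> part u = A"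
  proof -
    fix u A assume h: "A \<in> P" "u \<in> A"
    then have "u \<in> M" using AsubM by blast
    then have "part u \<in> P" "u \<in> part u" using part by auto
    then show "part u = A" using disj h by blast
  qed
  define low where "low i u = (if i \<in> colors (part u) c then PA (part u) i u else LA (part u) u)" for i u
  define high where "high i A = (if i \<in> colors P c' then PQ i A else L A)" for i A
  define lab where "lab u = L (part u) * K + LA (part u) u" for u
  define pp where "pp i u = high i (part u) * K + low i u" for i u
  have lowlt: "\<And>i u. u \<in> M \<Longrightarrow> low i u < K"
    unfolding low_def using part PAlt LAlt by auto
  have labK: "\<And>u. u \<in> M \<Longrightarrow> LA (part u) u < K" using part LAlt by blast
  have high_inj: "\<And>i. inj_on (high i) P"
    unfolding high_def using PQ L(1) by (simp add: inj_on_def)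
  have low_inj: "\<And>i A u v. A \<in> P \<Longrightarrow> u \<in> A \<Longrightarrow> v \<in> A \<Longrightarrow> low i u = low i v \<Longrightarrow> u = v"
  proof -
    fix i A u v assume h: "A \<in> P" "u \<in> A" "v \<in> A" "low i u = low i v"
    have pu: "part u = A" "part v = A" using part_eq h by auto
    show "u = v"
    proof (cases "i \<in> colors A c")
      case True
      then have "PA A i u = PA A i v" using h(4) pu unfolding low_def by simp
      moreover have "inj_on (PA A i) A" using PA h(1) True bij_betw_imp_inj_on by blast
      ultimately show ?thesis using h(2,3) inj_on_def by metis
    next
      case False
      then have "LA A u = LA A v" using h(4) pu unfolding low_def by simp
      moreover have "inj_on (LA A) A" using LAb[OF h(1)] bij_betw_imp_inj_on by blast
      ultimately show ?thesis using h(2,3) inj_on_def by metis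
    qed
  qed
  have lab_inj: "inj_on lab M"
  proof (rule inj_onI)
    fix u v assume h: "u \<in> M" "v \<in> M" "lab u = lab v"
    have e: "L (part u) = L (part v) \<and> LA (part u) u = LA (part v) v"
      using lex_eq[OF labK[OF h(1)] labK[OF h(2)]] h(3) unfolding lab_def by blast
    then have "part u = part v" using L(1) part h(1,2) inj_on_def by metis
    then have "LA (part u) u = LA (part u) v" using e by simp
    moreover have "inj_on (LA (part u)) (part u)" using LAb part h(1) bij_betw_imp_inj_on by blast
    ultimately show "u = v" using part h(1,2) \<open>part u = part v\<close> inj_on_def by metis
  qed
  have pgo_i: "pgo M (mono_edges c i) lab" if iM: "i \<in> colors M c" for i
    unfolding pgo_def
  proof (intro exI conjI)
    show "inj_on (pp i) M"
    proof (rule inj_onI)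
      fix u v assume h: "u \<in> M" "v \<in> M" "pp i u = pp i v"
      have e: "high i (part u) = high i (part v) \<and> low i u = low i v"
        using lex_eq[OF lowlt[OF h(1)] lowlt[OF h(2)]] h(3) unfolding pp_def by blast
      then have "part u = part v" using high_inj part h(1,2) inj_on_def by metis
      then show "u = v" using low_inj[of "part u" u v i] part h(1,2) e by metis
    qed
    show "\<forall>u\<in>M. \<forall>v\<in>M. lab v < lab u \<longrightarrow> (mono_edges c i u v \<longleftrightarrow> pp i u < pp i v)"
    proof (intro ballI impI)
      fix u v assume u: "u \<in> M" and v: "v \<in> M" and lt: "lab v < lab u"
      define A where "A = part u"
      define B where "B = part v"
      have AP: "A \<in> P" "u \<in> A" using part[OF u] A_def by auto
      have BP: "B \<in> P" "v \<in> B" using part[OF v] B_def by auto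
      have uv: "u \<noteq> v" using lt by auto
      have ltc: "L B < L A \<or> (L B = L A \<and> LA B v < LA A u)"
        using lex_less[OF labK[OF v] labK[OF u]] lt unfolding lab_def A_def B_def by blast
      have ppc: "pp i u < pp i v \<longleftrightarrow> high i A < high i B \<or> (high i A = high i B \<and> low i u < low i v)"
        using lex_less[OF lowlt[OF u] lowlt[OF v]] unfolding pp_def A_def B_def by blast
      show "mono_edges c i u v \<longleftrightarrow> pp i u < pp i v"
      proof (cases "A = B")
        case False
        have LAB: "L B < L A" using ltc False L(1) AP(1) BP(1) inj_on_def by metis
        have hne: "high i A \<noteq> high i B" using high_inj AP(1) BP(1) False inj_on_def by metis
        have cuv: "c u v = c' A B" using cross AP BP False by blast
        have me: "mono_edges c i u v \<longleftrightarrow> c' A B = i" unfolding mono_edges_def using uv cuv by simp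
        show ?thesis
        proof (cases "i \<in> colors P c'")
          case True
          have "mono_edges c' i A B \<longleftrightarrow> PQ i A < PQ i B" using PQ True AP(1) BP(1) LAB by blast
          moreover have "mono_edges c' i A B \<longleftrightarrow> c' A B = i" unfolding mono_edges_def using False by simp
          moreover have "high i A = PQ i A" "high i B = PQ i B" unfolding high_def using True by auto
          ultimately show ?thesis using me ppc hne by auto
        next
          case False
          have "c' A B \<in> colors P c'" unfolding colors_def using AP(1) BP(1) \<open>A \<noteq> B\<close> by blast
          then have "c' A B \<noteq> i" using False by blast
          moreover have "high i A = L A" "high i B = L B" unfolding high_def using False by auto
          ultimately show ?thesis using me ppc hne LAB by auto
        qed
      next
        case True
        have vA: "v \<in> A" using BP True by simp
        have LAlt2: "LA A v < LA A u" using ltc True by simp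
        have hh: "high i A = high i B" using True by simp
        have ppc2: "pp i u < pp i v \<longleftrightarrow> low i u < low i v" using ppc hh by auto
        have pv: "part v = A" using B_def True by simp
        have pu: "part u = A" using A_def by simp
        show ?thesis
        proof (cases "i \<in> colors A c")
          case True
          have "mono_edges c i u v \<longleftrightarrow> PA A i u < PA A i v" using PA True AP vA LAlt2 by blast
          moreover have "low i u = PA A i u" "low i v = PA A i v" unfolding low_def using pu pv True by auto
          ultimately show ?thesis using ppc2 by simp
        next
          case False
          have "c u v \<noteq> i"
          proof
            assume "c u v = i"
            then have "i \<in> colors A c" unfolding colors_def using AP(2) vA uv by blast
            then show False using False by blast
          qed
          then have "\<not> mono_edges c i u v" unfolding mono_edges_def by simp
          moreover have "low i u = LA A u" "low i v = LA A v" unfolding low_def using pu pv False by auto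
          ultimately show ?thesis using ppc2 LAlt2 by simp
        qed
      qed
    qed
  qed
  show ?thesis unfolding ceo_def using lab_inj pgo_i by blast
qed

lemma ceo_nocolors: "finite W \<Longrightarrow> colors W c = {} \<Longrightarrow> ceo W c"
  using finite_inj_nat unfolding ceo_def by blast

lemma rev_inj:
  assumes "bij_betw p W {1..(n::nat)}"
  shows "inj_on (\<lambda>x. Suc n - p x) W" "\<And>u v. u \<in> W \<Longrightarrow> v \<in> W \<Longrightarrow> (Suc n - p u < Suc n - p v \<longleftrightarrow> p v < p u)"
proof -
  have r: "\<And>x. x \<in> W \<Longrightarrow> p x \<le> n" using bij_betwE[OF assms] by fastforce
  show "\<And>u v. u \<in> W \<Longrightarrow> v \<in> W \<Longrightarrow> (Suc n - p u < Suc n - p v \<longleftrightarrow> p v < p u)"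
    using r by fastforce
  show "inj_on (\<lambda>x. Suc n - p x) W"
  proof (rule inj_onI)
    fix u v assume h: "u \<in> W" "v \<in> W" "Suc n - p u = Suc n - p v"
    then have "p u = p v" using r[OF h(1)] r[OF h(2)] by simp
    then show "u = v" using bij_betw_imp_inj_on[OF assms] h inj_on_def by metis
  qed
qed

lemma ceo_mono:
  assumes "finite Q" "\<forall>A\<in>Q. \<forall>B\<in>Q. A \<noteq> B \<longrightarrow> c' A B = col"
  shows "ceo Q c'"
proof -
  obtain l0 :: "'a \<Rightarrow> nat" where "inj_on l0 Q" using finite_inj_nat[OF assms(1)] by blast
  then obtain l where l: "bij_betw l Q {1..card Q}" using compress[OF assms(1)] by blast
  let ?p = "\<lambda>x. Suc (card Q) - l x"
  note ri = rev_inj[OF l]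
  have "pgo Q (mono_edges c' i) l" if "i \<in> colors Q c'" for i
  proof -
    have "i = col" using that assms(2) unfolding colors_def by blast
    have "\<forall>u\<in>Q. \<forall>v\<in>Q. l v < l u \<longrightarrow> (mono_edges c' i u v \<longleftrightarrow> ?p u < ?p v)"
    proof (intro ballI impI)
      fix u v assume h: "u \<in> Q" "v \<in> Q" "l v < l u"
      then have "u \<noteq> v" by auto
      then have "mono_edges c' i u v" unfolding mono_edges_def using assms(2) h \<open>i = col\<close> by blast
      moreover have "?p u < ?p v" using ri(2)[OF h(1,2)] h(3) by blast
      ultimately show "mono_edges c' i u v \<longleftrightarrow> ?p u < ?p v" by blast
    qed
    then show ?thesis unfolding pgo_def using ri(1) by blast
  qed
  then show ?thesis unfolding ceo_def using l bij_betw_imp_inj_on by blast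
qed

lemma pgo_compl:
  assumes "finite W" "pgo W E l" "\<forall>u\<in>W. \<forall>v\<in>W. u \<noteq> v \<longrightarrow> (E' u v \<longleftrightarrow> \<not> E u v)"
  shows "pgo W E' l"
proof -
  obtain p where p: "bij_betw p W {1..card W}" "\<forall>u\<in>W. \<forall>v\<in>W. l v < l u \<longrightarrow> (E u v \<longleftrightarrow> p u < p v)"
    using pgo_bounded[OF assms(1,2)] by blast
  note ri = rev_inj[OF p(1)]
  have pinj: "inj_on p W" using bij_betw_imp_inj_on[OF p(1)] .
  have "\<forall>u\<in>W. \<forall>v\<in>W. l v < l u \<longrightarrow> (E' u v \<longleftrightarrow> Suc (card W) - p u < Suc (card W) - p v)"
  proof (intro ballI impI)
    fix u v assume h: "u \<in> W" "v \<in> W" "l v < l u"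
    then have uv: "u \<noteq> v" by auto
    then have "p u \<noteq> p v" using pinj h inj_on_def by metis
    then have "(\<not> p u < p v) \<longleftrightarrow> p v < p u" by auto
    then show "E' u v \<longleftrightarrow> Suc (card W) - p u < Suc (card W) - p v"
      using assms(3) h p(2) uv ri(2)[OF h(1,2)] by blast
  qed
  then show ?thesis unfolding pgo_def using ri(1) by blast
qed

lemma strong_ceo:
  assumes ecg: "ecg V c"
    and iv: "\<forall>M. prime_module V c M \<longrightarrow> ceo (quot_vertices V c M) (quot_color c)"
  shows "strong_module V c M \<Longrightarrow> ceo M c"
proof (induction "card M" arbitrary: M rule: less_induct)
  case less
  have sM: "strong_module V c M" by fact
  have fV: "finite V" using ecg ecg_def by blast
  have MV: "M \<subseteq> V" "M \<noteq> {}" using strong_sub[OF sM] by auto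
  have fM: "finite M" using MV fV finite_subset by blast
  show ?case
  proof (cases "card M = 1")
    case True
    then obtain x where "M = {x}" using card_1_singletonE by blast
    then have "colors M c = {}" unfolding colors_def by auto
    then show ?thesis using ceo_nocolors fM by blast
  next
    case False
    let ?P = "Pmax V c M"
    have qP: "quot_vertices V c M = ?P" using False unfolding quot_vertices_def by simp
    note qp = quot_vertices_props[OF ecg sM, unfolded qP]
    have fP: "finite ?P" using qp by (elim conjE)
    have ceoA: "\<forall>A\<in>?P. ceo A c"
    proof
      fix A assume A: "A \<in> ?P"
      then have "strong_module V c A" "A \<subset> M" using pmax_strong by blast+
      moreover then have "card A < card M" using fM psubset_card_mono by blast
      ultimately show "ceo A c" using less.hyps by blast
    qed
    have ceoP: "ceo ?P (quot_color c)"
    proof (cases "prime_module V c M")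
      case True
      then show ?thesis using iv qP by metis
    next
      case False
      then obtain col where "\<forall>A\<in>?P. \<forall>B\<in>?P. A \<noteq> B \<longrightarrow> quot_color c A B = col"
        using False sM unfolding prime_module_def qP by blast
      then show ?thesis by (rule ceo_mono[OF fP])
    qed
    have ne: "\<forall>A\<in>?P. A \<noteq> {}" using pmax_strong strong_sub by blast
    have disj: "\<forall>A\<in>?P. \<forall>B\<in>?P. A \<noteq> B \<longrightarrow> A \<inter> B = {}" using pmax_disj by blast
    have un: "\<Union>?P = M"
    proof
      show "\<Union>?P \<subseteq> M" using pmax_strong by blast
      show "M \<subseteq> \<Union>?P" using pmax_cover[OF fV sM False] by blast
    qed
    have cross: "\<forall>A\<in>?P. \<forall>B\<in>?P. A \<noteq> B \<longrightarrow> (\<forall>u\<in>A. \<forall>v\<in>B. c u v = quot_color c A B)"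
      using pmax_cross[OF ecg] by blast
    show ?thesis using subst[OF fM ne disj un cross ceoP ceoA] .
  qed
qed

lemma NR:
  assumes "pgo V (mono_edges c (c x z)) l" "x \<in> V" "y \<in> V" "z \<in> V"
    "l x < l y" "l y < l z" "\<forall>u\<in>V. \<forall>v\<in>V. c u v = c v u"
  shows "c x z = c x y \<or> c x z = c y z"
proof (rule ccontr)
  assume n: "\<not> ?thesis"
  obtain p :: "'a \<Rightarrow> nat" where p: "inj_on p V" "\<forall>u\<in>V. \<forall>v\<in>V. l v < l u \<longrightarrow> (mono_edges c (c x z) u v \<longleftrightarrow> p u < p v)"
    using assms(1) unfolding pgo_def by blast
  have xz: "x \<noteq> z" using assms(5,6) by auto
  have "mono_edges c (c x z) z x" unfolding mono_edges_def using xz assms(2,4,7) by auto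
  then have a: "p z < p x" using p(2) assms(2,4,5,6) by auto
  have "\<not> mono_edges c (c x z) y x" unfolding mono_edges_def using n assms(2,3,7) by auto
  then have b: "\<not> p y < p x" using p(2) assms(2,3,5) by auto
  have "\<not> mono_edges c (c x z) z y" unfolding mono_edges_def using n assms(3,4,7) by auto
  then have d: "\<not> p z < p y" using p(2) assms(3,4,6) by auto
  show False using a b d by simp
qed

lemma ceo_rf:
  assumes ecg: "ecg V c" and ce: "ceo V c"
  shows "\<not> (\<exists>x y z. rainbow_triangle V c x y z)"
proof
  assume "\<exists>x y z. rainbow_triangle V c x y z"
  then obtain x y z where r: "rainbow_triangle V c x y z" by blast
  have sym: "\<forall>u\<in>V. \<forall>v\<in>V. c u v = c v u" using ecg unfolding ecg_def by (elim conjE)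
  obtain l :: "'a \<Rightarrow> nat" where l: "inj_on l V" "\<forall>i\<in>colors V c. pgo V (mono_edges c i) l"
    using ce unfolding ceo_def by blast
  have in3: "x \<in> V" "y \<in> V" "z \<in> V" "x \<noteq> y" "y \<noteq> z" "x \<noteq> z" using r unfolding rainbow_triangle_def by auto
  have R: "c x y \<noteq> c y z" "c x y \<noteq> c x z" "c y z \<noteq> c x z" using r unfolding rainbow_triangle_def by auto
  have S: "c y x = c x y" "c z y = c y z" "c z x = c x z" using sym in3 by auto
  have col: "\<And>a b. a \<in> V \<Longrightarrow> b \<in> V \<Longrightarrow> a \<noteq> b \<Longrightarrow> pgo V (mono_edges c (c a b)) l"
    using l(2) unfolding colors_def by blast
  have N: "\<And>a b d. a \<in> V \<Longrightarrow> b \<in> V \<Longrightarrow> d \<in> V \<Longrightarrow> l a < l b \<Longrightarrow> l b < l d \<Longrightarrow> c a d = c a b \<or> c a d = c b d"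
  proof -
    fix a b d assume h: "a \<in> V" "b \<in> V" "d \<in> V" "l a < l b" "l b < l d"
    have "a \<noteq> d" using h by auto
    then show "c a d = c a b \<or> c a d = c b d" using NR[OF col[OF h(1,3)] h sym] by blast
  qed
  have ln: "l x \<noteq> l y" "l y \<noteq> l z" "l x \<noteq> l z" using l(1) in3 inj_on_def by metis+
  show False
  proof (cases "l x < l y")
    case xy: True
    show False
    proof (cases "l y < l z")
      case True then show False using N[OF in3(1,2,3) xy True] R S by auto
    next
      case False
      then have zy: "l z < l y" using ln by auto
      show False
      proof (cases "l x < l z")
        case True then show False using N[OF in3(1,3,2) True zy] R S by auto
      next
        case False then have "l z < l x" using ln by auto
        then show False using N[OF in3(3,1,2) _ xy] R S by auto
      qed
    qed
  next
    case False
    then have yx: "l y < l x" using ln by auto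
    show False
    proof (cases "l x < l z")
      case True then show False using N[OF in3(2,1,3) yx True] R S by auto
    next
      case False
      then have zx: "l z < l x" using ln by auto
      show False
      proof (cases "l y < l z")
        case True then show False using N[OF in3(2,3,1) True zx] R S by auto
      next
        case False then have "l z < l y" using ln by auto
        then show False using N[OF in3(3,2,1) _ yx] R S by auto
      qed
    qed
  qed
qed

lemma small_mono:
  assumes "finite Q" "card Q \<le> 2" "\<forall>A\<in>Q. \<forall>B\<in>Q. c' A B = c' B A"
  shows "\<exists>col. \<forall>A\<in>Q. \<forall>B\<in>Q. A \<noteq> B \<longrightarrow> c' A B = col"
proof (cases "\<exists>A0\<in>Q. \<exists>B0\<in>Q. A0 \<noteq> B0")
  case True
  then obtain A0 B0 where h: "A0 \<in> Q" "B0 \<in> Q" "A0 \<noteq> B0" by blast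
  have "Q = {A0, B0}"
  proof (rule ccontr)
    assume "Q \<noteq> {A0, B0}"
    then obtain C where "C \<in> Q" "C \<noteq> A0" "C \<noteq> B0" using h by blast
    then have "{A0, B0, C} \<subseteq> Q" using h by blast
    then have "card {A0, B0, C} \<le> card Q" using assms(1) card_mono by blast
    then show False using assms(2) h \<open>C \<noteq> A0\<close> \<open>C \<noteq> B0\<close> by simp
  qed
  then show ?thesis using assms(3) h by (metis insert_iff singletonD)
next
  case False then show ?thesis by blast
qed

lemma v_iv:
  assumes ecg: "ecg V c" and spg: "\<forall>i\<in>colors V c. simple_perm_graph V (mono_edges c i)"
    and rf: "\<not> (\<exists>x y z. rainbow_triangle V c x y z)" and pM: "prime_module V c M"
  shows "ceo (quot_vertices V c M) (quot_color c)"
proof -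
  let ?Q = "quot_vertices V c M"
  let ?cq = "quot_color c"
  have sM: "strong_module V c M" using pM prime_module_def by blast
  have fV: "finite V" using ecg ecg_def by blast
  note qp = quot_vertices_props[OF ecg sM]
  have fQ: "finite ?Q" using qp by (elim conjE)
  have qa: "\<forall>A\<in>?Q. A \<noteq> {} \<and> A \<subseteq> V" using qp by (elim conjE)
  have qd: "\<forall>A\<in>?Q. \<forall>B\<in>?Q. A \<noteq> B \<longrightarrow> A \<inter> B = {}" using qp by (elim conjE)
  have symQ: "\<forall>A\<in>?Q. \<forall>B\<in>?Q. ?cq A B = ?cq B A" using quot_sym[OF ecg qa] .
  have rinj: "inj_on rep ?Q" using rep_inj qa qd by blast
  have rV: "rep ` ?Q \<subseteq> V"
  proof
    fix x assume "x \<in> rep ` ?Q"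
    then obtain A where A: "A \<in> ?Q" "x = rep A" by blast
    then have ne: "A \<noteq> {}" and AV: "A \<subseteq> V" using qa by auto
    show "x \<in> V" using rep_in[OF ne] A(2) AV by blast
  qed
  show ?thesis
  proof (cases "card ?Q \<ge> 3")
    case True
    have "card (colors ?Q ?cq) = 2" using prime_two_colors[OF ecg rf pM True] .
    then obtain a b where ab: "colors ?Q ?cq = {a, b}" "a \<noteq> b" using card_2_iff by metis
    have aV: "a \<in> colors V c"
    proof -
      have "a \<in> colors ?Q ?cq" using ab by blast
      then obtain A B where h: "A \<in> ?Q" "B \<in> ?Q" "A \<noteq> B" "?cq A B = a" unfolding colors_def by blast
      have "rep A \<noteq> rep B" using rinj h inj_on_def by metis
      moreover have "rep A \<in> V" "rep B \<in> V" using rV h by auto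
      moreover have "c (rep A) (rep B) = a" using h(4) quot_color_rep by metis
      ultimately show ?thesis unfolding colors_def by blast
    qed
    obtain l where l: "inj_on l V" "pgo V (mono_edges c a) l"
      using spg aV spg_iff[OF fV] by blast
    have eqv: "\<forall>A\<in>?Q. \<forall>B\<in>?Q. mono_edges ?cq a A B \<longleftrightarrow> mono_edges c a (rep A) (rep B)"
    proof (intro ballI)
      fix A B assume h: "A \<in> ?Q" "B \<in> ?Q"
      have "A \<noteq> B \<longleftrightarrow> rep A \<noteq> rep B" using rinj h inj_on_def by metis
      then show "mono_edges ?cq a A B \<longleftrightarrow> mono_edges c a (rep A) (rep B)"
        unfolding mono_edges_def quot_color_rep by simp
    qed
    have pa: "pgo ?Q (mono_edges ?cq a) (l \<circ> rep)" using pgo_transfer[OF rinj rV eqv l(2)] .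
    have compl: "\<forall>A\<in>?Q. \<forall>B\<in>?Q. A \<noteq> B \<longrightarrow> (mono_edges ?cq b A B \<longleftrightarrow> \<not> mono_edges ?cq a A B)"
    proof (intro ballI impI)
      fix A B assume h: "A \<in> ?Q" "B \<in> ?Q" "A \<noteq> B"
      then have "?cq A B \<in> {a, b}" using ab unfolding colors_def by blast
      then show "mono_edges ?cq b A B \<longleftrightarrow> \<not> mono_edges ?cq a A B"
        unfolding mono_edges_def using h(3) ab(2) by auto
    qed
    have pb: "pgo ?Q (mono_edges ?cq b) (l \<circ> rep)" using pgo_compl[OF fQ pa compl] .
    have "inj_on (l \<circ> rep) ?Q" using comp_inj_on[OF rinj inj_on_subset[OF l(1) rV]] .
    then show ?thesis unfolding ceo_def using pa pb ab by auto
  next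
    case False
    then have "card ?Q \<le> 2" by simp
    then obtain col where "\<forall>A\<in>?Q. \<forall>B\<in>?Q. A \<noteq> B \<longrightarrow> ?cq A B = col" using small_mono[OF fQ _ symQ] by blast
    then show ?thesis by (rule ceo_mono[OF fQ])
  qed
qed

theorem theorem4p1:
  fixes V :: "'a set" and c :: "'a \<Rightarrow> 'a \<Rightarrow> 'c"
  assumes "ecg V c"
  defines "st_i \<equiv> ce_perm_graph V c"
      and "st_ii \<equiv> (\<forall>W. W \<subseteq> V \<and> W \<noteq> {} \<longrightarrow> ce_perm_graph W c)"
      and "st_iii \<equiv> (\<forall>M. strong_module V c M \<longrightarrow>
                        ce_perm_graph (quot_vertices V c M) (quot_color c))"
      and "st_iv \<equiv> (\<forall>M. prime_module V c M \<longrightarrow>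
                        ce_perm_graph (quot_vertices V c M) (quot_color c)) \<and>
                   (\<forall>M. prime_module V c M \<and> card (quot_vertices V c M) \<ge> 3 \<longrightarrow>
                        card (colors (quot_vertices V c M) (quot_color c)) = 2)"
      and "st_v \<equiv> (\<forall>i\<in>colors V c. simple_perm_graph V (mono_edges c i)) \<and>
                  \<not> (\<exists>x y z. rainbow_triangle V c x y z)"
  shows "(st_i \<longleftrightarrow> st_ii) \<and> (st_i \<longleftrightarrow> st_iii) \<and> (st_i \<longleftrightarrow> st_iv) \<and> (st_i \<longleftrightarrow> st_v)"
proof -
  note ecg = assms(1)
  have fV: "finite V" using ecg ecg_def by blast
  have Vne: "V \<noteq> {}" using ecg ecg_def by blast
  have fQ: "\<And>M. strong_module V c M \<Longrightarrow> finite (quot_vertices V c M)"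
    using quot_vertices_props[OF ecg] by blast
  have prime_strong: "\<And>M. prime_module V c M \<Longrightarrow> strong_module V c M"
    unfolding prime_module_def by blast
  have ci: "st_i \<longleftrightarrow> ceo V c" unfolding st_i_def using ce_iff[OF fV] .
  have I_II: "st_ii" if "ceo V c"
    unfolding st_ii_def
  proof (intro allI impI)
    fix W assume W: "W \<subseteq> V \<and> W \<noteq> {}"
    have "ceo W c"
    proof (rule ceo_transfer[where f=id and V=V and c=c])
      show "inj_on id W" by simp
      show "id ` W \<subseteq> V" using W by simp
      show "\<forall>a\<in>W. \<forall>b\<in>W. a \<noteq> b \<longrightarrow> c a b = c (id a) (id b)" by simp
    qed (rule that)
    moreover have "finite W" using W fV finite_subset by blast
    ultimately show "ce_perm_graph W c" using ce_iff by blast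
  qed
  have II_I: "st_i" if "st_ii" using that Vne unfolding st_ii_def st_i_def by blast
  have I_III: "st_iii" if "ceo V c"
    unfolding st_iii_def
  proof (intro allI impI)
    fix M assume sM: "strong_module V c M"
    have "ceo (quot_vertices V c M) (quot_color c)" using ceo_quot[OF ecg sM that] .
    then show "ce_perm_graph (quot_vertices V c M) (quot_color c)" using ce_iff[OF fQ[OF sM]] by blast
  qed
  have IVp_I: "ceo V c" if "\<forall>M. prime_module V c M \<longrightarrow> ceo (quot_vertices V c M) (quot_color c)"
    using strong_ceo[OF ecg that strong_V[OF Vne]] .
  have III_IVp: "\<forall>M. prime_module V c M \<longrightarrow> ceo (quot_vertices V c M) (quot_color c)" if "st_iii"
  proof (intro allI impI)
    fix M assume pM: "prime_module V c M"
    then have sM: "strong_module V c M" using prime_strong by blast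
    then show "ceo (quot_vertices V c M) (quot_color c)" using that ce_iff[OF fQ[OF sM]] unfolding st_iii_def by blast
  qed
  have IV_IVp: "\<forall>M. prime_module V c M \<longrightarrow> ceo (quot_vertices V c M) (quot_color c)" if "st_iv"
  proof (intro allI impI)
    fix M assume pM: "prime_module V c M"
    then have sM: "strong_module V c M" using prime_strong by blast
    then show "ceo (quot_vertices V c M) (quot_color c)" using that pM ce_iff[OF fQ[OF sM]] unfolding st_iv_def by blast
  qed
  have I_IV: "st_iv" if ce: "ceo V c"
  proof -
    have rf: "\<not> (\<exists>x y z. rainbow_triangle V c x y z)" using ceo_rf[OF ecg ce] .
    have "st_iii" using I_III[OF ce] .
    then have p1: "\<forall>M. prime_module V c M \<longrightarrow> ce_perm_graph (quot_vertices V c M) (quot_color c)"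
      unfolding st_iii_def using prime_strong by blast
    have p2: "\<forall>M. prime_module V c M \<and> card (quot_vertices V c M) \<ge> 3 \<longrightarrow>
                        card (colors (quot_vertices V c M) (quot_color c)) = 2"
      using prime_two_colors[OF ecg rf] by blast
    show ?thesis unfolding st_iv_def using p1 p2 by blast
  qed
  have I_V: "st_v" if ce: "ceo V c"
  proof -
    have rf: "\<not> (\<exists>x y z. rainbow_triangle V c x y z)" using ceo_rf[OF ecg ce] .
    obtain l where l: "inj_on l V" "\<forall>i\<in>colors V c. pgo V (mono_edges c i) l" using ce unfolding ceo_def by blast
    have "\<forall>i\<in>colors V c. simple_perm_graph V (mono_edges c i)" using l spg_iff[OF fV] by blast
    then show ?thesis unfolding st_v_def using rf by blast
  qed
  have V_IVp: "\<forall>M. prime_module V c M \<longrightarrow> ceo (quot_vertices V c M) (quot_color c)" if "st_v"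
    using v_iv[OF ecg] that unfolding st_v_def by blast
  show ?thesis
    using ci I_II II_I I_III IVp_I III_IVp IV_IVp I_IV I_V V_IVp by blast
qed

end
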